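(* Let $|\cdot|$ be a norm on $\mathbb{R}^d$ and let $\mathbf{X}=\{\mathbf{X}_j,j\in\mathbb{Z}\}$ be a strictly stationary, regularly varying $\mathbb{R}^d$-valued time series with tail process $\mathbf{Y}$. Let $u_n>0$ and positive integers $r_n$ satisfy $u_n\to\infty$, $r_n\to\infty$, $nw_n\to\infty$, $r_n/n\to0$, $r_nw_n\to0$, where $w_n=\mathbb{P}(|\mathbf{X}_0|>u_n)$. Assume $\mathcal{AC}(r_n,u_n)$ holds and let $\gamma>0$. Then $$\lim_{n\to\infty}\frac{\mathbb{E}[t(1)^\gamma\mathbf{1}_{A_1}]}{r_n^{\gamma+1}w_n}=\lim_{n\to\infty}\frac{\mathbb{E}[(r_n-t(1))^\gamma\mathbf{1}_{A_1}]}{r_n^{\gamma+1}w_n}=\frac{\vartheta}{\gamma+1},$$ and the same limits hold with $t(1)$ replaced by $t(N_1)$.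
   Context: Tail process: for all $i\le j$ the law of $x^{-1}(\mathbf{X}_i,\dots,\mathbf{X}_j)$ given $|\mathbf{X}_0|>x$ converges weakly to that of $(\mathbf{Y}_i,\dots,\mathbf{Y}_j)$ as $x\to\infty$. Notation: $\mathbf{x}^*_{i,j}=\sup_{i\le l\le j}|\mathbf{x}_l|$. $\mathcal{AC}(r_n,u_n)$: for all $s,t>0$, $\lim_{\ell\to\infty}\limsup_{n\to\infty}\mathbb{P}(\max_{\ell\le|j|\le r_n}|\mathbf{X}_j|>u_ns\mid|\mathbf{X}_0|>u_nt)=0$. $\vartheta=\mathbb{P}(\mathbf{Y}^*_{-\infty,-1}\le1)$. $A_1=\{\mathbf{X}^*_{1,r_n}>u_n\}$; on $A_1$, $t(1)$ and $t(N_1)$ are the smallest and largest $i\in\{1,\dots,r_n\}$ with $|\mathbf{X}_i|>u_n$. *)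

theory Defs
  imports "HOL-Probability.Probability"
begin

definition is_norm :: "('v::real_vector \<Rightarrow> real) \<Rightarrow> bool" where
  "is_norm nrm \<longleftrightarrow>
     (\<forall>x. 0 \<le> nrm x) \<and> (\<forall>x. nrm x = 0 \<longleftrightarrow> x = 0) \<and>
     (\<forall>c x. nrm (c *\<^sub>R x) = \<bar>c\<bar> * nrm x) \<and> (\<forall>x y. nrm (x + y) \<le> nrm x + nrm y)"

definition cond_prob :: "'a measure \<Rightarrow> 'a set \<Rightarrow> 'a set \<Rightarrow> real" where
  "cond_prob M A B = measure M (A \<inter> B) / measure M B"

definition random_series :: "'a measure \<Rightarrow> ('a \<Rightarrow> int \<Rightarrow> 'v::topological_space) \<Rightarrow> bool" where
  "random_series M X \<longleftrightarrow> prob_space M \<and> (\<forall>j. (\<lambda>\<omega>. X \<omega> j) \<in> borel_measurable M)"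

definition strictly_stationary :: "'a measure \<Rightarrow> ('a \<Rightarrow> int \<Rightarrow> 'v::topological_space) \<Rightarrow> bool" where
  "strictly_stationary M X \<longleftrightarrow>
     (\<forall>h::int. distr M (Pi\<^sub>M UNIV (\<lambda>_. borel)) (\<lambda>\<omega> j. X \<omega> (j + h))
              = distr M (Pi\<^sub>M UNIV (\<lambda>_. borel)) X)"

text \<open>Tail process: for all i \<le> j, the law of x^{-1}(X_i,...,X_j) given nrm X_0 > x converges
  weakly to that of (Y_i,...,Y_j) as x \<rightarrow> \<infinity>.  Weak convergence is expressed through all bounded
  continuous test functions of the coordinates i..j (continuity w.r.t. the product topology).\<close>
definition is_tail_process ::
  "('v::real_normed_vector \<Rightarrow> real) \<Rightarrow> 'a measure \<Rightarrow> ('a \<Rightarrow> int \<Rightarrow> 'v)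
     \<Rightarrow> 'b measure \<Rightarrow> ('b \<Rightarrow> int \<Rightarrow> 'v) \<Rightarrow> bool" where
  "is_tail_process nrm M X N Y \<longleftrightarrow>
     random_series N Y \<and>
     (\<forall>i j. i \<le> j \<longrightarrow>
       (\<forall>g :: (int \<Rightarrow> 'v) \<Rightarrow> real.
          bounded (range g) \<longrightarrow> continuous_on UNIV g \<longrightarrow>
          (\<forall>z z'. (\<forall>l\<in>{i..j}. z l = z' l) \<longrightarrow> g z = g z') \<longrightarrow>
          ((\<lambda>x::real. (\<integral>\<omega>. indicator {\<omega>\<in>space M. nrm (X \<omega> 0) > x} \<omega>
                                 * g (\<lambda>l. inverse x *\<^sub>R X \<omega> l) \<partial>M)
                       / measure M {\<omega>\<in>space M. nrm (X \<omega> 0) > x})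
            \<longlongrightarrow> (\<integral>\<omega>. g (Y \<omega>) \<partial>N)) at_top))"

text \<open>Regular variation of the series: the tail of nrm X_0 is regularly varying with positive index
  and a tail process exists (equivalently, all finite-dimensional vectors are multivariate
  regularly varying, Basrak and Segers 2009).\<close>
definition regularly_varying_series ::
  "('v::real_normed_vector \<Rightarrow> real) \<Rightarrow> 'a measure \<Rightarrow> ('a \<Rightarrow> int \<Rightarrow> 'v) \<Rightarrow> bool" where
  "regularly_varying_series nrm M X \<longleftrightarrow>
     (\<forall>x. measure M {\<omega>\<in>space M. nrm (X \<omega> 0) > x} > 0) \<and>
     (\<exists>\<alpha>>0. \<forall>y>0. ((\<lambda>x. measure M {\<omega>\<in>space M. nrm (X \<omega> 0) > x * y}
                         / measure M {\<omega>\<in>space M. nrm (X \<omega> 0) > x}) \<longlongrightarrow> y powr (-\<alpha>)) at_top) \<and>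
     (\<exists>(N :: (int \<Rightarrow> 'v) measure) Y. is_tail_process nrm M X N Y)"

definition AC_cond ::
  "('v \<Rightarrow> real) \<Rightarrow> 'a measure \<Rightarrow> ('a \<Rightarrow> int \<Rightarrow> 'v) \<Rightarrow> (nat \<Rightarrow> nat) \<Rightarrow> (nat \<Rightarrow> real) \<Rightarrow> bool" where
  "AC_cond nrm M X r u \<longleftrightarrow>
     (\<forall>s>0. \<forall>t>0.
       ((\<lambda>l::nat. limsup (\<lambda>n. ereal (cond_prob M
            {\<omega>\<in>space M. \<exists>j::int. int l \<le> \<bar>j\<bar> \<and> \<bar>j\<bar> \<le> int (r n) \<and> nrm (X \<omega> j) > u n * s}
            {\<omega>\<in>space M. nrm (X \<omega> 0) > u n * t})))
        \<longlongrightarrow> 0) sequentially)"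

definition theta_tail :: "('v \<Rightarrow> real) \<Rightarrow> 'b measure \<Rightarrow> ('b \<Rightarrow> int \<Rightarrow> 'v) \<Rightarrow> real" where
  "theta_tail nrm N Y = measure N {\<omega>\<in>space N. \<forall>j::int. j \<le> -1 \<longrightarrow> nrm (Y \<omega> j) \<le> 1}"

definition A1 :: "('v \<Rightarrow> real) \<Rightarrow> 'a measure \<Rightarrow> ('a \<Rightarrow> int \<Rightarrow> 'v) \<Rightarrow> nat \<Rightarrow> real \<Rightarrow> 'a set" where
  "A1 nrm M X rn un = {\<omega>\<in>space M. \<exists>i::int. 1 \<le> i \<and> i \<le> int rn \<and> nrm (X \<omega> i) > un}"

text \<open>t(1) and t(N_1): first and last exceedance times in {1..r_n} (meaningful on A_1).\<close>
definition t_first :: "('v \<Rightarrow> real) \<Rightarrow> ('a \<Rightarrow> int \<Rightarrow> 'v) \<Rightarrow> nat \<Rightarrow> real \<Rightarrow> 'a \<Rightarrow> int" where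
  "t_first nrm X rn un \<omega> = (LEAST i::int. 1 \<le> i \<and> i \<le> int rn \<and> nrm (X \<omega> i) > un)"

definition t_last :: "('v \<Rightarrow> real) \<Rightarrow> ('a \<Rightarrow> int \<Rightarrow> 'v) \<Rightarrow> nat \<Rightarrow> real \<Rightarrow> 'a \<Rightarrow> int" where
  "t_last nrm X rn un \<omega> = (GREATEST i::int. 1 \<le> i \<and> i \<le> int rn \<and> nrm (X \<omega> i) > un)"

end

theory Submission
  imports Defs
begin


lemma is_normD:
  assumes "is_norm nrm"
  shows "nrm 0 = 0" "\<And>x. 0 \<le> nrm x" "\<And>c x. nrm (c *\<^sub>R x) = \<bar>c\<bar> * nrm x"
    "\<And>x y. nrm (x + y) \<le> nrm x + nrm y" "\<And>x. nrm (- x) = nrm x"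
proof -
  show "nrm 0 = 0" using assms unfolding is_norm_def by auto
  show "\<And>x. 0 \<le> nrm x" using assms unfolding is_norm_def by auto
  show h: "\<And>c x. nrm (c *\<^sub>R x) = \<bar>c\<bar> * nrm x" using assms unfolding is_norm_def by auto
  show "\<And>x y. nrm (x + y) \<le> nrm x + nrm y" using assms unfolding is_norm_def by auto
  show "\<And>x. nrm (- x) = nrm x" using h[of "-1"] by simp
qed

lemma is_norm_sum:
  assumes "is_norm nrm" and "finite S"
  shows "nrm (sum f S) \<le> (\<Sum>i\<in>S. nrm (f i))"
  using assms(2)
proof (induction S rule: finite_induct)
  case empty then show ?case using is_normD(1)[OF assms(1)] by simp
next
  case (insert x F)
  then show ?case using is_normD(4)[OF assms(1), of "f x" "sum f F"] by simp
qed

lemma is_norm_bound: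
  fixes nrm :: "real ^ 'd \<Rightarrow> real"
  assumes "is_norm nrm"
  shows "nrm x \<le> (\<Sum>i\<in>UNIV. nrm (axis i 1)) * norm x"
proof -
  have "nrm x = nrm (\<Sum>i\<in>UNIV. (x $ i) *\<^sub>R axis i 1)"
    using basis_expansion[of x] by (simp add: scalar_mult_eq_scaleR)
  also have "\<dots> \<le> (\<Sum>i\<in>UNIV. nrm ((x $ i) *\<^sub>R axis i (1::real)))"
    by (rule is_norm_sum[OF assms]) simp
  also have "\<dots> = (\<Sum>i\<in>UNIV. \<bar>x $ i\<bar> * nrm (axis i 1))"
    using is_normD(3)[OF assms] by simp
  also have "\<dots> \<le> (\<Sum>i\<in>UNIV. norm x * nrm (axis i 1))"
    by (intro sum_mono mult_right_mono component_le_norm_cart is_normD(2)[OF assms])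
  finally show ?thesis by (simp add: sum_distrib_left mult.commute)
qed

lemma is_norm_continuous:
  fixes nrm :: "real ^ 'd \<Rightarrow> real"
  assumes "is_norm nrm"
  shows "continuous_on UNIV nrm"
proof -
  define C where "C = (\<Sum>i\<in>UNIV. nrm (axis i (1::real)))"
  have C0: "0 \<le> C" unfolding C_def by (intro sum_nonneg is_normD(2)[OF assms])
  have "C-lipschitz_on UNIV nrm"
  proof (rule lipschitz_onI)
    fix x y :: "real ^ 'd"
    have 1: "nrm x \<le> nrm (x - y) + nrm y" using is_normD(4)[OF assms, of "x - y" y] by simp
    have 2: "nrm y \<le> nrm (y - x) + nrm x" using is_normD(4)[OF assms, of "y - x" x] by simp
    have 3: "nrm (y - x) = nrm (x - y)" using is_normD(5)[OF assms, of "x - y"] by simp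
    have 4: "nrm (x - y) \<le> C * norm (x - y)" unfolding C_def by (rule is_norm_bound[OF assms])
    show "dist (nrm x) (nrm y) \<le> C * dist x y"
      using 1 2 3 4 by (simp add: dist_real_def dist_norm abs_le_iff)
  qed (use C0 in auto)
  then show ?thesis by (rule lipschitz_on_continuous_on)
qed

lemma is_norm_measurable:
  fixes nrm :: "real ^ 'd \<Rightarrow> real"
  assumes "is_norm nrm"
  shows "nrm \<in> borel_measurable borel"
  using is_norm_continuous[OF assms] by (rule borel_measurable_continuous_onI)

definition hh :: "real \<Rightarrow> real \<Rightarrow> real" where
  "hh d t = min 1 (max 0 (t / d))"

lemma hh_props:
  assumes "d > 0"
  shows "0 \<le> hh d t" "hh d t \<le> 1" "hh d t > 0 \<Longrightarrow> t > 0" "t \<ge> d \<Longrightarrow> hh d t = 1"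
  using assms by (auto simp: hh_def field_simps min_def max_def split: if_splits)

lemma hh_cont[continuous_intros]:
  "continuous_on S f \<Longrightarrow> continuous_on S (\<lambda>x. hh d (f x))"
  unfolding hh_def divide_inverse by (intro continuous_intros)

lemma hh_meas[measurable]: "hh d \<in> borel_measurable borel"
  unfolding hh_def by measurable


lemma powr_step:
  fixes a g :: real
  assumes "a \<ge> 0" "g > 0"
  shows "(g+1) * a powr g \<le> (a+1) powr (g+1) - a powr (g+1)"
    "(a+1) powr (g+1) - a powr (g+1) \<le> (g+1) * (a+1) powr g"
proof -
  have cont: "continuous_on {a..a+1} (\<lambda>x. x powr (g+1))"
    by (rule continuous_on_powr') (use assms in \<open>auto intro: continuous_intros\<close>)
  have dif: "(\<lambda>x. x powr (g+1)) differentiable at x" if "a < x" for x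
    using has_real_derivative_powr[of x "g+1"] that assms real_differentiable_def by force
  obtain l z where z: "a < z" "z < a+1" "((\<lambda>x. x powr (g+1)) has_real_derivative l) (at z)"
    and eq: "(a+1) powr (g+1) - a powr (g+1) = (a + 1 - a) * l"
    using MVT[of a "a+1" "\<lambda>x. x powr (g+1)"] cont dif by auto
  have "l = (g+1) * z powr g"
    using DERIV_unique[OF z(3) has_real_derivative_powr[of z "g+1"]] z assms by simp
  then have eq2: "(a+1) powr (g+1) - a powr (g+1) = (g+1) * z powr g" using eq by simp
  have "a powr g \<le> z powr g" using z assms by (intro powr_mono2) auto
  moreover have "z powr g \<le> (a+1) powr g" using z assms by (intro powr_mono2) auto
  ultimately show "(g+1) * a powr g \<le> (a+1) powr (g+1) - a powr (g+1)"
    "(a+1) powr (g+1) - a powr (g+1) \<le> (g+1) * (a+1) powr g"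
    using eq2 assms by auto
qed

lemma powsum_bounds:
  fixes g :: real
  assumes "g > 0"
  shows "real N powr (g+1) \<le> (g+1) * (\<Sum>j<N. real (j+1) powr g)"
    "(g+1) * (\<Sum>j<N. real (j+1) powr g) \<le> real (N+1) powr (g+1)"
proof -
  have "real N powr (g+1) = (\<Sum>j<N. real (Suc j) powr (g+1) - real j powr (g+1))"
    by (subst sum_lessThan_telescope) (use assms in simp)
  also have "\<dots> \<le> (\<Sum>j<N. (g+1) * real (j+1) powr g)"
    by (intro sum_mono) (use powr_step(2)[of "real _" g] assms in \<open>simp add: add.commute\<close>)
  finally show "real N powr (g+1) \<le> (g+1) * (\<Sum>j<N. real (j+1) powr g)"
    by (simp add: sum_distrib_left)
  have "(g+1) * (\<Sum>j<N. real (j+1) powr g) = (\<Sum>j<N. (g+1) * real (j+1) powr g)"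
    by (simp add: sum_distrib_left)
  also have "\<dots> \<le> (\<Sum>j<N. real (Suc (j+1)) powr (g+1) - real (j+1) powr (g+1))"
    by (intro sum_mono) (use powr_step(1)[of "real (_+1)" g] assms in \<open>simp add: add.commute\<close>)
  also have "\<dots> = real (N+1) powr (g+1) - 1"
    using sum_lessThan_telescope[of "\<lambda>j. real (j+1) powr (g+1)" N] by simp
  finally show "(g+1) * (\<Sum>j<N. real (j+1) powr g) \<le> real (N+1) powr (g+1)" by simp
qed

lemma powsum_lim:
  fixes g :: real
  assumes "g > 0"
  shows "(\<lambda>N. (\<Sum>j<N. real (j+1) powr g) / real N powr (g+1)) \<longlonglongrightarrow> 1 / (g+1)"
proof (rule tendsto_sandwich[where f="\<lambda>_. 1/(g+1)" and h="\<lambda>N. ((real N + 1) / real N) powr (g+1) / (g+1)"])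
  show "\<forall>\<^sub>F N in sequentially. 1 / (g + 1) \<le> (\<Sum>j<N. real (j + 1) powr g) / real N powr (g + 1)"
    using eventually_gt_at_top[of 0]
  proof eventually_elim
    case (elim N)
    then show ?case using powsum_bounds(1)[OF assms, of N] assms
      by (simp add: field_simps)
  qed
  show "\<forall>\<^sub>F N in sequentially. (\<Sum>j<N. real (j + 1) powr g) / real N powr (g + 1)
      \<le> ((real N + 1) / real N) powr (g+1) / (g+1)"
    using eventually_gt_at_top[of 0]
  proof eventually_elim
    case (elim N)
    have "((real N + 1) / real N) powr (g+1) = real (N+1) powr (g+1) / real N powr (g+1)"
      by (simp add: powr_divide add.commute)
    then show ?case using powsum_bounds(2)[OF assms, of N] assms elim
      by (simp add: field_simps add.commute)
  qed
  show "(\<lambda>_. 1 / (g + 1)) \<longlonglongrightarrow> 1 / (g + 1)" by simp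
  have "(\<lambda>N. (real N + 1) / real N) \<longlonglongrightarrow> 1"
  proof -
    have "(\<lambda>N. 1 + 1 / real N) \<longlonglongrightarrow> 1 + 0"
      by (intro tendsto_add tendsto_const lim_1_over_n)
    moreover have "\<forall>\<^sub>F N in sequentially. 1 + 1 / real N = (real N + 1) / real N"
      using eventually_gt_at_top[of 0] by eventually_elim (simp add: field_simps)
    ultimately show ?thesis using Lim_transform_eventually by fastforce
  qed
  then have "(\<lambda>N. ((real N + 1) / real N) powr (g+1)) \<longlonglongrightarrow> 1 powr (g+1)"
    by (intro tendsto_powr) (auto)
  then show "(\<lambda>N. ((real N + 1) / real N) powr (g+1) / (g+1)) \<longlonglongrightarrow> 1 / (g + 1)"
    using assms by (intro tendsto_divide) auto
qed

lemma powsum0_eq: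
  fixes g :: real
  assumes "g > 0"
  shows "(\<Sum>j<N. real j powr g) = (\<Sum>j<N. real (j+1) powr g) - real N powr g"
proof (induction N)
  case 0 then show ?case by simp
next
  case (Suc N) then show ?case by simp
qed

lemma powsum0_lim:
  fixes g :: real
  assumes "g > 0"
  shows "(\<lambda>N. (\<Sum>j<N. real j powr g) / real N powr (g+1)) \<longlonglongrightarrow> 1 / (g+1)"
proof -
  have "(\<lambda>N. (\<Sum>j<N. real (j+1) powr g) / real N powr (g+1) - 1 / real N) \<longlonglongrightarrow> 1/(g+1) - 0"
    by (intro tendsto_diff powsum_lim assms lim_inverse_n') 
  moreover have "\<forall>\<^sub>F N in sequentially. (\<Sum>j<N. real (j+1) powr g) / real N powr (g+1) - 1 / real N
     = (\<Sum>j<N. real j powr g) / real N powr (g+1)"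
    using eventually_gt_at_top[of 0]
  proof eventually_elim
    case (elim N)
    have "real N powr g / real N powr (g+1) = 1 / real N"
      using elim by (simp add: powr_add)
    then show ?case unfolding powsum0_eq[OF assms] by (simp add: diff_divide_distrib)
  qed
  ultimately show ?thesis using Lim_transform_eventually by fastforce
qed


lemma sum_split_bound_aux:
  fixes f q :: "nat \<Rightarrow> real"
  assumes "\<And>m. m < R \<Longrightarrow> m < l \<Longrightarrow> \<bar>f m\<bar> \<le> P"
    "\<And>m. m < R \<Longrightarrow> l \<le> m \<Longrightarrow> \<bar>f m\<bar> \<le> q m" "\<And>m. 0 \<le> q m" "0 \<le> P"
  shows "(\<Sum>m<R. \<bar>f m\<bar>) \<le> real (min R l) * P + (\<Sum>m<R. q m)"
  using assms(1,2)
proof (induction R)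
  case 0 then show ?case by simp
next
  case (Suc R)
  have IH: "(\<Sum>m<R. \<bar>f m\<bar>) \<le> real (min R l) * P + (\<Sum>m<R. q m)"
    using Suc by auto
  show ?case
  proof (cases "R < l")
    case True
    then have "\<bar>f R\<bar> \<le> P" using Suc.prems(1)[of R] by auto
    moreover have "real (min (Suc R) l) = real (min R l) + 1" using True by simp
    ultimately show ?thesis using IH assms(3)[of R] by (simp add: algebra_simps)
  next
    case False
    then have "\<bar>f R\<bar> \<le> q R" using Suc.prems(2)[of R] by auto
    moreover have "min (Suc R) l = min R l" using False by simp
    ultimately show ?thesis using IH by simp
  qed
qed

lemma sum_split_bound:
  fixes f q :: "nat \<Rightarrow> real"
  assumes "\<And>m. m < R \<Longrightarrow> m < l \<Longrightarrow> \<bar>f m\<bar> \<le> P"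
    "\<And>m. m < R \<Longrightarrow> l \<le> m \<Longrightarrow> \<bar>f m\<bar> \<le> q m" "\<And>m. 0 \<le> q m" "0 \<le> P"
  shows "\<bar>\<Sum>m<R. f m\<bar> \<le> real l * P + (\<Sum>m<R. q m)"
proof -
  have "\<bar>\<Sum>m<R. f m\<bar> \<le> (\<Sum>m<R. \<bar>f m\<bar>)" by (rule sum_abs)
  also have "\<dots> \<le> real (min R l) * P + (\<Sum>m<R. q m)" by (rule sum_split_bound_aux[OF assms])
  also have "\<dots> \<le> real l * P + (\<Sum>m<R. q m)"
    using assms(4) by (intro add_right_mono mult_right_mono) auto
  finally show ?thesis .
qed

lemma weighted_conv:
  fixes c \<omega> :: "nat \<Rightarrow> nat \<Rightarrow> real" and B :: "nat \<Rightarrow> real" and R :: "nat \<Rightarrow> nat"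
  assumes c1: "\<And>n m. \<bar>c n m - \<theta>\<bar> \<le> 1"
    and K: "\<And>\<epsilon>. \<epsilon> > 0 \<Longrightarrow> \<exists>l. eventually (\<lambda>n. \<forall>m. l \<le> m \<longrightarrow> m < R n \<longrightarrow> \<bar>c n m - \<theta>\<bar> \<le> \<epsilon>) sequentially"
    and w0: "\<And>n m. 0 \<le> \<omega> n m" and wB: "\<And>n m. m < R n \<Longrightarrow> \<omega> n m \<le> B n"
    and B: "B \<longlonglongrightarrow> 0"
    and S: "(\<lambda>n. \<Sum>m<R n. \<omega> n m) \<longlonglongrightarrow> S"
  shows "(\<lambda>n. \<Sum>m<R n. \<omega> n m * c n m) \<longlonglongrightarrow> \<theta> * S"
proof -
  define E where "E n = (\<Sum>m<R n. \<omega> n m * (c n m - \<theta>))" for n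
  have E0: "E \<longlonglongrightarrow> 0"
    unfolding tendsto_iff
  proof (intro allI impI)
    fix e :: real assume e: "e > 0"
    define \<epsilon> where "\<epsilon> = e / (2 * (\<bar>S\<bar> + 2))"
    have \<epsilon>: "\<epsilon> > 0" using e by (simp add: \<epsilon>_def)
    obtain l where l: "eventually (\<lambda>n. \<forall>m. l \<le> m \<longrightarrow> m < R n \<longrightarrow> \<bar>c n m - \<theta>\<bar> \<le> \<epsilon>) sequentially"
      using K[OF \<epsilon>] by blast
    have ev1: "eventually (\<lambda>n. dist (\<Sum>m<R n. \<omega> n m) S < 1) sequentially"
      using S by (simp add: tendsto_iff)
    have ev2: "eventually (\<lambda>n. dist (B n) 0 < e / (2 * (real l + 1))) sequentially"
      using B e by (simp add: tendsto_iff)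
    show "eventually (\<lambda>n. dist (E n) 0 < e) sequentially"
      using l ev1 ev2
    proof eventually_elim
      case (elim n)
      have "\<bar>E n\<bar> \<le> real l * \<bar>B n\<bar> + (\<Sum>m<R n. \<epsilon> * \<omega> n m)"
        unfolding E_def
      proof (rule sum_split_bound)
        fix m assume m: "m < R n" "m < l"
        have "\<bar>\<omega> n m * (c n m - \<theta>)\<bar> \<le> \<omega> n m * 1"
          using w0[of n m] c1[of n m] by (simp add: abs_mult mult_left_mono del: mult_1_right)
        also have "\<dots> \<le> \<bar>B n\<bar>" using wB[OF m(1)] by simp
        finally show "\<bar>\<omega> n m * (c n m - \<theta>)\<bar> \<le> \<bar>B n\<bar>" .
      next
        fix m assume m: "m < R n" "l \<le> m"
        then have "\<bar>c n m - \<theta>\<bar> \<le> \<epsilon>" using elim by auto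
        then show "\<bar>\<omega> n m * (c n m - \<theta>)\<bar> \<le> \<epsilon> * \<omega> n m"
        proof -
          have "\<omega> n m * \<bar>c n m - \<theta>\<bar> \<le> \<omega> n m * \<epsilon>"
            using w0[of n m] \<open>\<bar>c n m - \<theta>\<bar> \<le> \<epsilon>\<close> by (rule mult_left_mono[rotated])
          then show ?thesis using w0[of n m] by (simp add: abs_mult mult.commute)
        qed
      qed (use \<epsilon> w0 in auto)
      also have "\<dots> = real l * \<bar>B n\<bar> + \<epsilon> * (\<Sum>m<R n. \<omega> n m)"
        by (simp add: sum_distrib_left)
      also have "\<dots> \<le> real l * (e / (2 * (real l + 1))) + \<epsilon> * (\<bar>S\<bar> + 1)"
      proof (intro add_mono mult_left_mono)
        show "\<bar>B n\<bar> \<le> e / (2 * (real l + 1))" using elim by (simp add: dist_real_def)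
        show "(\<Sum>m<R n. \<omega> n m) \<le> \<bar>S\<bar> + 1" using elim by (simp add: dist_real_def)
      qed (use \<epsilon> in auto)
      also have "\<dots> < e"
      proof -
        have "real l * (e / (2 * (real l + 1))) < e / 2"
          using e by (simp add: field_simps)
        moreover have "\<epsilon> * (\<bar>S\<bar> + 1) < e / 2"
          using e unfolding \<epsilon>_def by (simp add: field_simps)
        ultimately show ?thesis by linarith
      qed
      finally show ?case by (simp add: dist_real_def)
    qed
  qed
  have "(\<lambda>n. E n + \<theta> * (\<Sum>m<R n. \<omega> n m)) \<longlonglongrightarrow> 0 + \<theta> * S"
    by (intro tendsto_add E0 tendsto_mult tendsto_const S)
  moreover have "E n + \<theta> * (\<Sum>m<R n. \<omega> n m) = (\<Sum>m<R n. \<omega> n m * c n m)" for n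
    unfolding E_def by (simp add: sum_distrib_left algebra_simps sum_subtractf)
  ultimately show ?thesis by simp
qed


lemma K_from_avg:
  fixes c :: "nat \<Rightarrow> nat \<Rightarrow> real" and R :: "nat \<Rightarrow> nat"
  assumes c1: "\<And>n m m'. \<bar>c n m - c n m'\<bar> \<le> 1"
    and R: "filterlim R at_top sequentially"
    and avg: "(\<lambda>n. (\<Sum>m<R n. c n m) / real (R n)) \<longlonglongrightarrow> \<theta>"
    and close: "\<And>\<epsilon>. \<epsilon> > 0 \<Longrightarrow> \<exists>l. eventually (\<lambda>n. \<forall>m. l \<le> m \<longrightarrow> m < R n \<longrightarrow> \<bar>c n l - c n m\<bar> \<le> \<epsilon>) sequentially"
    and eps: "\<epsilon> > 0"
  shows "\<exists>l. eventually (\<lambda>n. \<forall>m. l \<le> m \<longrightarrow> m < R n \<longrightarrow> \<bar>c n m - \<theta>\<bar> \<le> \<epsilon>) sequentially"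
proof -
  have e4: "\<epsilon>/4 > 0" using eps by simp
  obtain l where l: "eventually (\<lambda>n. \<forall>m. l \<le> m \<longrightarrow> m < R n \<longrightarrow> \<bar>c n l - c n m\<bar> \<le> \<epsilon>/4) sequentially"
    using close[OF e4] by blast
  have ev1: "eventually (\<lambda>n. \<bar>(\<Sum>m<R n. c n m) / real (R n) - \<theta>\<bar> < \<epsilon>/4) sequentially"
    using avg e4 unfolding tendsto_iff dist_real_def by blast
  have Rinf: "filterlim (\<lambda>n. real (R n)) at_top sequentially"
    using filterlim_compose[OF filterlim_real_sequentially R] by simp
  have "(\<lambda>n. real l / real (R n)) \<longlonglongrightarrow> 0"
    by (rule tendsto_divide_0[OF tendsto_const filterlim_at_top_imp_at_infinity[OF Rinf]])
  then have ev2: "eventually (\<lambda>n. real l / real (R n) < \<epsilon>/4) sequentially"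
    by (rule order_tendstoD(2)) (use eps in simp)
  have ev3: "eventually (\<lambda>n. R n > l) sequentially"
  proof -
    have "eventually (\<lambda>n. Suc l \<le> R n) sequentially" using R unfolding filterlim_at_top by blast
    then show ?thesis by (rule eventually_mono) auto
  qed
  show ?thesis
  proof (rule exI[of _ l])
    show "eventually (\<lambda>n. \<forall>m. l \<le> m \<longrightarrow> m < R n \<longrightarrow> \<bar>c n m - \<theta>\<bar> \<le> \<epsilon>) sequentially"
      using l ev1 ev2 ev3
    proof eventually_elim
      case (elim n)
      have Rpos: "real (R n) > 0" using elim by simp
      have "\<bar>\<Sum>m<R n. c n l - c n m\<bar> \<le> real l * 1 + (\<Sum>m<R n. \<epsilon>/4)"
      proof (rule sum_split_bound)
        fix m assume "m < R n" "m < l" then show "\<bar>c n l - c n m\<bar> \<le> 1" using c1 by blast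
      next
        fix m assume "m < R n" "l \<le> m" then show "\<bar>c n l - c n m\<bar> \<le> \<epsilon>/4" using elim(1) by blast
      qed (use eps in auto)
      moreover have "(\<Sum>m<R n. c n l - c n m) = real (R n) * c n l - (\<Sum>m<R n. c n m)"
        by (simp add: sum_subtractf)
      moreover have "(\<Sum>m<R n. \<epsilon>/4) = real (R n) * (\<epsilon>/4)" by simp
      ultimately have "\<bar>real (R n) * c n l - (\<Sum>m<R n. c n m)\<bar> \<le> real l + real (R n) * (\<epsilon>/4)"
        by simp
      moreover have "c n l - (\<Sum>m<R n. c n m) / real (R n) = (real (R n) * c n l - (\<Sum>m<R n. c n m)) / real (R n)"
        using Rpos by (simp add: diff_divide_distrib)
      ultimately have "\<bar>c n l - (\<Sum>m<R n. c n m) / real (R n)\<bar> \<le> (real l + real (R n) * (\<epsilon>/4)) / real (R n)"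
        using Rpos by (metis abs_div_pos divide_right_mono less_le)
      also have "\<dots> = real l / real (R n) + \<epsilon>/4"
        using Rpos by (simp add: add_divide_distrib)
      finally have "\<bar>c n l - (\<Sum>m<R n. c n m) / real (R n)\<bar> \<le> real l / real (R n) + \<epsilon>/4" .
      then have cl: "\<bar>c n l - \<theta>\<bar> \<le> 3 * \<epsilon> / 4" using elim by linarith
      show ?case
      proof (intro allI impI)
        fix m assume m: "l \<le> m" "m < R n"
        then have "\<bar>c n l - c n m\<bar> \<le> \<epsilon>/4" using elim(1) by blast
        then show "\<bar>c n m - \<theta>\<bar> \<le> \<epsilon>" using cl by linarith
      qed
    qed
  qed
qed


locale ts =
  fixes nrm :: "real ^ 'd \<Rightarrow> real" and M :: "'a measure" and X :: "'a \<Rightarrow> int \<Rightarrow> real ^ 'd"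
  assumes nrm: "is_norm nrm" and rs: "random_series M X" and st: "strictly_stationary M X"
begin

lemma prob: "prob_space M" using rs unfolding random_series_def by auto

lemma Xm[measurable]: "(\<lambda>\<omega>. X \<omega> j) \<in> borel_measurable M"
  using rs unfolding random_series_def by auto

lemma nrm_m[measurable]: "nrm \<in> borel_measurable borel"
  by (rule is_norm_measurable[OF nrm])

abbreviation "PP \<equiv> (Pi\<^sub>M (UNIV :: int set) (\<lambda>_. (borel :: (real ^ 'd) measure)))"

lemma X_PP: "X \<in> measurable M PP"
proof -
  have "(\<lambda>\<omega> i. X \<omega> i) \<in> measurable M PP"
    by (rule measurable_PiM_single') (auto simp: PiE_UNIV_domain)
  then show ?thesis by simp
qed

lemma shift_PP: "(\<lambda>\<omega> j. X \<omega> (j + h)) \<in> measurable M PP"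
  by (rule measurable_PiM_single') (auto simp: PiE_UNIV_domain)

lemma stat_measure:
  assumes "S \<in> sets PP"
  shows "measure M {\<omega>\<in>space M. (\<lambda>j. X \<omega> (j + h)) \<in> S} = measure M {\<omega>\<in>space M. X \<omega> \<in> S}"
proof -
  have "distr M PP (\<lambda>\<omega> j. X \<omega> (j + h)) = distr M PP X"
    using st unfolding strictly_stationary_def by blast
  then have "measure (distr M PP (\<lambda>\<omega> j. X \<omega> (j + h))) S = measure (distr M PP X) S" by simp
  then have "measure M ((\<lambda>\<omega> j. X \<omega> (j + h)) -` S \<inter> space M) = measure M (X -` S \<inter> space M)"
    using measure_distr[OF shift_PP assms] measure_distr[OF X_PP assms] by simp
  moreover have "(\<lambda>\<omega> j. X \<omega> (j + h)) -` S \<inter> space M = {\<omega>\<in>space M. (\<lambda>j. X \<omega> (j + h)) \<in> S}" by auto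
  moreover have "X -` S \<inter> space M = {\<omega>\<in>space M. X \<omega> \<in> S}" by auto
  ultimately show ?thesis by simp
qed

definition "Bk x m = {\<omega>\<in>space M. nrm (X \<omega> 0) > x \<and> (\<forall>k::int. 1 \<le> k \<and> k \<le> int m \<longrightarrow> nrm (X \<omega> (-k)) \<le> x)}"
definition "Fk x m = {\<omega>\<in>space M. nrm (X \<omega> 0) > x \<and> (\<forall>k::int. 1 \<le> k \<and> k \<le> int m \<longrightarrow> nrm (X \<omega> k) \<le> x)}"
definition "Efst x i = {\<omega>\<in>space M. nrm (X \<omega> i) > x \<and> (\<forall>k::int. 1 \<le> k \<and> k < i \<longrightarrow> nrm (X \<omega> k) \<le> x)}"
definition "Elst rn x i = {\<omega>\<in>space M. nrm (X \<omega> i) > x \<and> (\<forall>k::int. i < k \<and> k \<le> int rn \<longrightarrow> nrm (X \<omega> k) \<le> x)}"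
definition "W0 x = {\<omega>\<in>space M. nrm (X \<omega> 0) > x}"

lemma sets_defs[measurable]: "Bk x m \<in> sets M" "Fk x m \<in> sets M" "Efst x i \<in> sets M"
  "Elst rn x i \<in> sets M" "W0 x \<in> sets M"
  unfolding Bk_def Fk_def Efst_def Elst_def W0_def by measurable

definition "SB x m = {z\<in>space PP. nrm (z 0) > x \<and> (\<forall>k::int. 1 \<le> k \<and> k \<le> int m \<longrightarrow> nrm (z (-k)) \<le> x)}"
definition "SF x m = {z\<in>space PP. nrm (z 0) > x \<and> (\<forall>k::int. 1 \<le> k \<and> k \<le> int m \<longrightarrow> nrm (z k) \<le> x)}"

lemma SB_sets: "SB x m \<in> sets PP" unfolding SB_def by measurable
lemma SF_sets: "SF x m \<in> sets PP" unfolding SF_def by measurable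

lemma space_PP: "space PP = UNIV"
  by (simp add: space_PiM PiE_UNIV_domain)

lemma stat_first:
  assumes "1 \<le> i"
  shows "measure M (Efst x i) = measure M (Bk x (nat (i - 1)))"
proof -
  have "Efst x i = {\<omega>\<in>space M. (\<lambda>j. X \<omega> (j + i)) \<in> SB x (nat (i - 1))}"
  proof (intro set_eqI iffI)
    fix \<omega> assume "\<omega> \<in> Efst x i"
    then have o: "\<omega> \<in> space M" "nrm (X \<omega> i) > x" "\<And>k. 1 \<le> k \<Longrightarrow> k < i \<Longrightarrow> nrm (X \<omega> k) \<le> x"
      unfolding Efst_def by auto
    have "nrm (X \<omega> (- k + i)) \<le> x" if "1 \<le> k" "k \<le> int (nat (i - 1))" for k
      using o(3)[of "- k + i"] that assms by auto
    then show "\<omega> \<in> {\<omega>\<in>space M. (\<lambda>j. X \<omega> (j + i)) \<in> SB x (nat (i - 1))}"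
      using o unfolding SB_def space_PP by auto
  next
    fix \<omega> assume "\<omega> \<in> {\<omega>\<in>space M. (\<lambda>j. X \<omega> (j + i)) \<in> SB x (nat (i - 1))}"
    then have o: "\<omega> \<in> space M" "nrm (X \<omega> i) > x"
       "\<And>k. 1 \<le> k \<Longrightarrow> k \<le> int (nat (i - 1)) \<Longrightarrow> nrm (X \<omega> (- k + i)) \<le> x"
      unfolding SB_def by auto
    have "nrm (X \<omega> k) \<le> x" if "1 \<le> k" "k < i" for k
      using o(3)[of "i - k"] that assms by auto
    then show "\<omega> \<in> Efst x i" using o unfolding Efst_def by auto
  qed
  moreover have "Bk x (nat (i - 1)) = {\<omega>\<in>space M. X \<omega> \<in> SB x (nat (i - 1))}"
    unfolding Bk_def SB_def space_PP by auto
  ultimately show ?thesis using stat_measure[OF SB_sets] by simp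
qed

lemma stat_last:
  assumes "1 \<le> i" "i \<le> int rn"
  shows "measure M (Elst rn x i) = measure M (Fk x (nat (int rn - i)))"
proof -
  have "Elst rn x i = {\<omega>\<in>space M. (\<lambda>j. X \<omega> (j + i)) \<in> SF x (nat (int rn - i))}"
  proof (intro set_eqI iffI)
    fix \<omega> assume "\<omega> \<in> Elst rn x i"
    then have o: "\<omega> \<in> space M" "nrm (X \<omega> i) > x" "\<And>k. i < k \<Longrightarrow> k \<le> int rn \<Longrightarrow> nrm (X \<omega> k) \<le> x"
      unfolding Elst_def by auto
    have "nrm (X \<omega> (k + i)) \<le> x" if "1 \<le> k" "k \<le> int (nat (int rn - i))" for k
      using o(3)[of "k + i"] that assms by auto
    then show "\<omega> \<in> {\<omega>\<in>space M. (\<lambda>j. X \<omega> (j + i)) \<in> SF x (nat (int rn - i))}"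
      using o unfolding SF_def space_PP by auto
  next
    fix \<omega> assume "\<omega> \<in> {\<omega>\<in>space M. (\<lambda>j. X \<omega> (j + i)) \<in> SF x (nat (int rn - i))}"
    then have o: "\<omega> \<in> space M" "nrm (X \<omega> i) > x"
       "\<And>k. 1 \<le> k \<Longrightarrow> k \<le> int (nat (int rn - i)) \<Longrightarrow> nrm (X \<omega> (k + i)) \<le> x"
      unfolding SF_def by auto
    have "nrm (X \<omega> k) \<le> x" if "i < k" "k \<le> int rn" for k
      using o(3)[of "k - i"] that assms by auto
    then show "\<omega> \<in> Elst rn x i" using o unfolding Elst_def by auto
  qed
  moreover have "Fk x (nat (int rn - i)) = {\<omega>\<in>space M. X \<omega> \<in> SF x (nat (int rn - i))}"
    unfolding Fk_def SF_def space_PP by auto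
  ultimately show ?thesis using stat_measure[OF SF_sets] by simp
qed

end


context ts begin

lemma Efst_sub: "1 \<le> i \<Longrightarrow> i \<le> int rn \<Longrightarrow> Efst x i \<subseteq> A1 nrm M X rn x"
  unfolding Efst_def A1_def by auto

lemma int_first:
  "(\<integral>\<omega>. indicator (A1 nrm M X rn x) \<omega> * f (t_first nrm X rn x \<omega>) \<partial>M)
     = (\<Sum>i\<in>{1..int rn}. f i * measure M (Efst x i))"
proof -
  interpret prob_space M by (rule prob)
  have pw: "indicator (A1 nrm M X rn x) \<omega> * f (t_first nrm X rn x \<omega>)
      = (\<Sum>i\<in>{1..int rn}. f i * indicator (Efst x i) \<omega>)" if om: "\<omega> \<in> space M" for \<omega>
  proof (cases "\<omega> \<in> A1 nrm M X rn x")
    case True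
    define T where "T = {i. 1 \<le> i \<and> i \<le> int rn \<and> nrm (X \<omega> i) > x}"
    have Tfin: "finite T" unfolding T_def by (rule finite_subset[of _ "{1..int rn}"]) auto
    have Tne: "T \<noteq> {}" using True unfolding T_def A1_def by auto
    define i0 where "i0 = Min T"
    have i0T: "i0 \<in> T" unfolding i0_def using Tfin Tne by simp
    have i0min: "\<And>j. j \<in> T \<Longrightarrow> i0 \<le> j" unfolding i0_def using Tfin by simp
    have tf: "t_first nrm X rn x \<omega> = i0"
      unfolding t_first_def
      by (rule Least_equality) (use i0T i0min in \<open>auto simp: T_def\<close>)
    have E: "\<omega> \<in> Efst x i \<longleftrightarrow> i = i0" if "i \<in> {1..int rn}" for i
    proof
      assume "\<omega> \<in> Efst x i"
      then have a: "nrm (X \<omega> i) > x" "\<And>k. 1 \<le> k \<Longrightarrow> k < i \<Longrightarrow> nrm (X \<omega> k) \<le> x"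
        unfolding Efst_def by auto
      have "i \<in> T" using a(1) that unfolding T_def by auto
      then have "i0 \<le> i" by (rule i0min)
      moreover have "\<not> i0 < i" using a(2)[of i0] i0T unfolding T_def by auto
      ultimately show "i = i0" by simp
    next
      assume "i = i0"
      have "nrm (X \<omega> k) \<le> x" if "1 \<le> k" "k < i0" for k
      proof (rule ccontr)
        assume "\<not> nrm (X \<omega> k) \<le> x"
        then have "k \<in> T" using that i0T unfolding T_def by auto
        then show False using i0min[of k] that by simp
      qed
      then show "\<omega> \<in> Efst x i" using i0T om \<open>i = i0\<close> unfolding T_def Efst_def by auto
    qed
    have "(\<Sum>i\<in>{1..int rn}. f i * indicator (Efst x i) \<omega>) = (\<Sum>i\<in>{1..int rn}. if i = i0 then f i else 0)"
      by (intro sum.cong refl) (use E in \<open>auto simp: indicator_def\<close>)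
    also have "\<dots> = f i0" using i0T unfolding T_def by simp
    finally show ?thesis using True tf by simp
  next
    case False
    have "\<omega> \<notin> Efst x i" if "i \<in> {1..int rn}" for i using Efst_sub[of i rn x] that False by auto
    then show ?thesis using False by simp
  qed
  have "(\<integral>\<omega>. indicator (A1 nrm M X rn x) \<omega> * f (t_first nrm X rn x \<omega>) \<partial>M)
      = (\<integral>\<omega>. (\<Sum>i\<in>{1..int rn}. f i * indicator (Efst x i) \<omega>) \<partial>M)"
    by (rule Bochner_Integration.integral_cong[OF refl pw])
  also have "\<dots> = (\<Sum>i\<in>{1..int rn}. (\<integral>\<omega>. f i * indicator (Efst x i) \<omega> \<partial>M))"
  proof (rule Bochner_Integration.integral_sum)
    fix i
    have "integrable M (indicator (Efst x i) :: 'a \<Rightarrow> real)"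
      by (rule integrable_real_indicator) (auto simp: less_top[symmetric])
    then show "integrable M (\<lambda>\<omega>. f i * indicator (Efst x i) \<omega>)" by (rule integrable_mult_right)
  qed
  also have "\<dots> = (\<Sum>i\<in>{1..int rn}. f i * measure M (Efst x i))"
    by (simp add: Int_absorb2 sets.sets_into_space)
  finally show ?thesis .
qed

lemma Elst_sub: "1 \<le> i \<Longrightarrow> i \<le> int rn \<Longrightarrow> Elst rn x i \<subseteq> A1 nrm M X rn x"
  unfolding Elst_def A1_def by auto

lemma int_last:
  "(\<integral>\<omega>. indicator (A1 nrm M X rn x) \<omega> * f (t_last nrm X rn x \<omega>) \<partial>M)
     = (\<Sum>i\<in>{1..int rn}. f i * measure M (Elst rn x i))"
proof -
  interpret prob_space M by (rule prob)
  have pw: "indicator (A1 nrm M X rn x) \<omega> * f (t_last nrm X rn x \<omega>)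
      = (\<Sum>i\<in>{1..int rn}. f i * indicator (Elst rn x i) \<omega>)" if om: "\<omega> \<in> space M" for \<omega>
  proof (cases "\<omega> \<in> A1 nrm M X rn x")
    case True
    define T where "T = {i. 1 \<le> i \<and> i \<le> int rn \<and> nrm (X \<omega> i) > x}"
    have Tfin: "finite T" unfolding T_def by (rule finite_subset[of _ "{1..int rn}"]) auto
    have Tne: "T \<noteq> {}" using True unfolding T_def A1_def by auto
    define i0 where "i0 = Max T"
    have i0T: "i0 \<in> T" unfolding i0_def using Tfin Tne by simp
    have i0max: "\<And>j. j \<in> T \<Longrightarrow> j \<le> i0" unfolding i0_def using Tfin by simp
    have tf: "t_last nrm X rn x \<omega> = i0"
      unfolding t_last_def
      by (rule Greatest_equality) (use i0T i0max in \<open>auto simp: T_def\<close>)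
    have E: "\<omega> \<in> Elst rn x i \<longleftrightarrow> i = i0" if "i \<in> {1..int rn}" for i
    proof
      assume "\<omega> \<in> Elst rn x i"
      then have a: "nrm (X \<omega> i) > x" "\<And>k. i < k \<Longrightarrow> k \<le> int rn \<Longrightarrow> nrm (X \<omega> k) \<le> x"
        unfolding Elst_def by auto
      have "i \<in> T" using a(1) that unfolding T_def by auto
      then have "i \<le> i0" by (rule i0max)
      moreover have "\<not> i < i0" using a(2)[of i0] i0T unfolding T_def by auto
      ultimately show "i = i0" by simp
    next
      assume "i = i0"
      have "nrm (X \<omega> k) \<le> x" if "i0 < k" "k \<le> int rn" for k
      proof (rule ccontr)
        assume "\<not> nrm (X \<omega> k) \<le> x"
        then have "k \<in> T" using that i0T unfolding T_def by auto
        then show False using i0max[of k] that by simp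
      qed
      then show "\<omega> \<in> Elst rn x i" using i0T om \<open>i = i0\<close> unfolding T_def Elst_def by auto
    qed
    have "(\<Sum>i\<in>{1..int rn}. f i * indicator (Elst rn x i) \<omega>) = (\<Sum>i\<in>{1..int rn}. if i = i0 then f i else 0)"
      by (intro sum.cong refl) (use E in \<open>auto simp: indicator_def\<close>)
    also have "\<dots> = f i0" using i0T unfolding T_def by simp
    finally show ?thesis using True tf by simp
  next
    case False
    have "\<omega> \<notin> Elst rn x i" if "i \<in> {1..int rn}" for i using Elst_sub[of i rn x] that False by auto
    then show ?thesis using False by simp
  qed
  have "(\<integral>\<omega>. indicator (A1 nrm M X rn x) \<omega> * f (t_last nrm X rn x \<omega>) \<partial>M)
      = (\<integral>\<omega>. (\<Sum>i\<in>{1..int rn}. f i * indicator (Elst rn x i) \<omega>) \<partial>M)"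
    by (rule Bochner_Integration.integral_cong[OF refl pw])
  also have "\<dots> = (\<Sum>i\<in>{1..int rn}. (\<integral>\<omega>. f i * indicator (Elst rn x i) \<omega> \<partial>M))"
  proof (rule Bochner_Integration.integral_sum)
    fix i
    have "integrable M (indicator (Elst rn x i) :: 'a \<Rightarrow> real)"
      by (rule integrable_real_indicator) (auto simp: less_top[symmetric])
    then show "integrable M (\<lambda>\<omega>. f i * indicator (Elst rn x i) \<omega>)" by (rule integrable_mult_right)
  qed
  also have "\<dots> = (\<Sum>i\<in>{1..int rn}. f i * measure M (Elst rn x i))"
    by (simp add: Int_absorb2 sets.sets_into_space)
  finally show ?thesis .
qed

end


locale mainloc = ts nrm M X
  for nrm :: "real ^ 'd \<Rightarrow> real" and M :: "'a measure" and X :: "'a \<Rightarrow> int \<Rightarrow> real ^ 'd" +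
  fixes N :: "'b measure" and Y :: "'b \<Rightarrow> int \<Rightarrow> real ^ 'd"
    and u :: "nat \<Rightarrow> real" and r :: "nat \<Rightarrow> nat" and \<alpha> :: real
  assumes tail: "is_tail_process nrm M X N Y"
    and alpha: "\<alpha> > 0"
    and RV: "\<And>y. y > 0 \<Longrightarrow> ((\<lambda>x. measure M {\<omega>\<in>space M. nrm (X \<omega> 0) > x * y}
                         / measure M {\<omega>\<in>space M. nrm (X \<omega> 0) > x}) \<longlongrightarrow> y powr (-\<alpha>)) at_top"
    and Wpos: "\<And>x. measure M {\<omega>\<in>space M. nrm (X \<omega> 0) > x} > 0"
    and upos: "\<And>n. u n > 0" and ulim: "filterlim u at_top sequentially"
    and rpos: "\<And>n. r n \<ge> 1" and rlim: "filterlim r at_top sequentially"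
    and AC: "AC_cond nrm M X r u"
begin

lemma probN: "prob_space N" and Ym[measurable]: "(\<lambda>\<omega>. Y \<omega> j) \<in> borel_measurable N"
  using tail unfolding is_tail_process_def random_series_def by auto

definition "w n = measure M (W0 (u n))"
definition "a n m = measure M (Bk (u n) m) / w n"
definition "b n m = measure M (Fk (u n) m) / w n"
definition "TYset l t = {\<omega>\<in>space N. \<forall>k::int. 1 \<le> k \<and> k \<le> int l \<longrightarrow> nrm (Y \<omega> (-k)) \<le> t}"
definition "TY l t = measure N (TYset l t)"
definition "\<theta> = theta_tail nrm N Y"

lemma TYset_sets[measurable]: "TYset l t \<in> sets N" unfolding TYset_def by measurable

lemma W0_eq: "W0 x = {\<omega>\<in>space M. nrm (X \<omega> 0) > x}" unfolding W0_def by simp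

lemma wpos: "w n > 0" unfolding w_def W0_eq by (rule Wpos)

lemma Bk_sub: "Bk x m \<subseteq> W0 x" unfolding Bk_def W0_def by auto
lemma Fk_sub: "Fk x m \<subseteq> W0 x" unfolding Fk_def W0_def by auto
lemma Bk_mono: "l \<le> m \<Longrightarrow> Bk x m \<subseteq> Bk x l" unfolding Bk_def by auto
lemma Fk_mono: "l \<le> m \<Longrightarrow> Fk x m \<subseteq> Fk x l" unfolding Fk_def by auto

lemma a01: "0 \<le> a n m" "a n m \<le> 1"
proof -
  interpret prob_space M by (rule prob)
  show "0 \<le> a n m" unfolding a_def using wpos[of n] by simp
  have "measure M (Bk (u n) m) \<le> w n" unfolding w_def
    by (rule finite_measure_mono[OF Bk_sub]) simp
  then show "a n m \<le> 1" unfolding a_def using wpos[of n] by simp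
qed

lemma b01: "0 \<le> b n m" "b n m \<le> 1"
proof -
  interpret prob_space M by (rule prob)
  show "0 \<le> b n m" unfolding b_def using wpos[of n] by simp
  have "measure M (Fk (u n) m) \<le> w n" unfolding w_def
    by (rule finite_measure_mono[OF Fk_sub]) simp
  then show "b n m \<le> 1" unfolding b_def using wpos[of n] by simp
qed

lemma a_mono: "l \<le> m \<Longrightarrow> a n m \<le> a n l"
proof -
  interpret prob_space M by (rule prob)
  assume "l \<le> m"
  then have "measure M (Bk (u n) m) \<le> measure M (Bk (u n) l)"
    by (intro finite_measure_mono Bk_mono) auto
  then show ?thesis unfolding a_def using wpos[of n] by (simp add: divide_right_mono)
qed

lemma b_mono: "l \<le> m \<Longrightarrow> b n m \<le> b n l"
proof -
  interpret prob_space M by (rule prob)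
  assume "l \<le> m"
  then have "measure M (Fk (u n) m) \<le> measure M (Fk (u n) l)"
    by (intro finite_measure_mono Fk_mono) auto
  then show ?thesis unfolding b_def using wpos[of n] by (simp add: divide_right_mono)
qed

definition "Dset n l = {\<omega>\<in>space M. \<exists>j::int. int l \<le> \<bar>j\<bar> \<and> \<bar>j\<bar> \<le> int (r n) \<and> nrm (X \<omega> j) > u n}"

lemma Dset_sets[measurable]: "Dset n l \<in> sets M" unfolding Dset_def by measurable

lemma AC_ev:
  assumes "\<epsilon> > 0"
  shows "\<exists>l. eventually (\<lambda>n. measure M (Dset n l \<inter> W0 (u n)) / w n < \<epsilon>) sequentially"
proof -
  have lim: "((\<lambda>l::nat. limsup (\<lambda>n. ereal (cond_prob M (Dset n l) (W0 (u n))))) \<longlongrightarrow> 0) sequentially"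
    using AC unfolding AC_cond_def Dset_def W0_def
    by (auto dest!: spec[of _ 1])
  have "eventually (\<lambda>l. limsup (\<lambda>n. ereal (cond_prob M (Dset n l) (W0 (u n)))) < ereal \<epsilon>) sequentially"
    by (rule order_tendstoD(2)[OF lim]) (use assms in simp)
  then obtain l where l: "limsup (\<lambda>n. ereal (cond_prob M (Dset n l) (W0 (u n)))) < ereal \<epsilon>"
    by (auto simp: eventually_sequentially)
  have "eventually (\<lambda>n. ereal (cond_prob M (Dset n l) (W0 (u n))) < ereal \<epsilon>) sequentially"
    by (rule Limsup_lessD[OF l])
  then show ?thesis
    by (intro exI[of _ l]) (auto simp: cond_prob_def w_def elim: eventually_mono)
qed

lemma a_close:
  assumes "\<epsilon> > 0"
  shows "\<exists>l. eventually (\<lambda>n. \<forall>m. l \<le> m \<longrightarrow> m \<le> r n \<longrightarrow> a n l - a n m < \<epsilon>) sequentially"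
proof -
  interpret prob_space M by (rule prob)
  obtain l where l: "eventually (\<lambda>n. measure M (Dset n l \<inter> W0 (u n)) / w n < \<epsilon>) sequentially"
    using AC_ev[OF assms] by blast
  show ?thesis
  proof (intro exI[of _ l])
    show "eventually (\<lambda>n. \<forall>m. l \<le> m \<longrightarrow> m \<le> r n \<longrightarrow> a n l - a n m < \<epsilon>) sequentially"
      using l
    proof eventually_elim
      case (elim n)
      show ?case
      proof (intro allI impI)
        fix m assume m: "l \<le> m" "m \<le> r n"
        have sub: "Bk (u n) l - Bk (u n) m \<subseteq> Dset n l \<inter> W0 (u n)"
        proof
          fix \<omega> assume o: "\<omega> \<in> Bk (u n) l - Bk (u n) m"
          then obtain k where k: "1 \<le> k" "k \<le> int m" "nrm (X \<omega> (-k)) > u n"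
            unfolding Bk_def by auto
          have "\<not> k \<le> int l" using o k unfolding Bk_def by auto
          then have "int l \<le> \<bar>-k\<bar> \<and> \<bar>-k\<bar> \<le> int (r n) \<and> nrm (X \<omega> (-k)) > u n"
            using k m by auto
          then show "\<omega> \<in> Dset n l \<inter> W0 (u n)" using o unfolding Dset_def Bk_def W0_def by blast
        qed
        have "measure M (Bk (u n) l) - measure M (Bk (u n) m) = measure M (Bk (u n) l - Bk (u n) m)"
          by (rule finite_measure_Diff[symmetric]) (use Bk_mono[OF m(1)] in auto)
        also have "\<dots> \<le> measure M (Dset n l \<inter> W0 (u n))"
          by (rule finite_measure_mono[OF sub]) simp
        finally have "a n l - a n m \<le> measure M (Dset n l \<inter> W0 (u n)) / w n"
          unfolding a_def using wpos[of n] by (simp add: diff_divide_distrib[symmetric] divide_right_mono)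
        then show "a n l - a n m < \<epsilon>" using elim by linarith
      qed
    qed
  qed
qed

lemma b_close:
  assumes "\<epsilon> > 0"
  shows "\<exists>l. eventually (\<lambda>n. \<forall>m. l \<le> m \<longrightarrow> m \<le> r n \<longrightarrow> b n l - b n m < \<epsilon>) sequentially"
proof -
  interpret prob_space M by (rule prob)
  obtain l where l: "eventually (\<lambda>n. measure M (Dset n l \<inter> W0 (u n)) / w n < \<epsilon>) sequentially"
    using AC_ev[OF assms] by blast
  show ?thesis
  proof (intro exI[of _ l])
    show "eventually (\<lambda>n. \<forall>m. l \<le> m \<longrightarrow> m \<le> r n \<longrightarrow> b n l - b n m < \<epsilon>) sequentially"
      using l
    proof eventually_elim
      case (elim n)
      show ?case
      proof (intro allI impI)
        fix m assume m: "l \<le> m" "m \<le> r n"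
        have sub: "Fk (u n) l - Fk (u n) m \<subseteq> Dset n l \<inter> W0 (u n)"
        proof
          fix \<omega> assume o: "\<omega> \<in> Fk (u n) l - Fk (u n) m"
          then obtain k where k: "1 \<le> k" "k \<le> int m" "nrm (X \<omega> k) > u n"
            unfolding Fk_def by auto
          have "\<not> k \<le> int l" using o k unfolding Fk_def by auto
          then have "int l \<le> \<bar>k\<bar> \<and> \<bar>k\<bar> \<le> int (r n) \<and> nrm (X \<omega> k) > u n"
            using k m by auto
          then show "\<omega> \<in> Dset n l \<inter> W0 (u n)" using o unfolding Dset_def Fk_def W0_def by blast
        qed
        have "measure M (Fk (u n) l) - measure M (Fk (u n) m) = measure M (Fk (u n) l - Fk (u n) m)"
          by (rule finite_measure_Diff[symmetric]) (use Fk_mono[OF m(1)] in auto)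
        also have "\<dots> \<le> measure M (Dset n l \<inter> W0 (u n))"
          by (rule finite_measure_mono[OF sub]) simp
        finally have "b n l - b n m \<le> measure M (Dset n l \<inter> W0 (u n)) / w n"
          unfolding b_def using wpos[of n] by (simp add: diff_divide_distrib[symmetric] divide_right_mono)
        then show "b n l - b n m < \<epsilon>" using elim by linarith
      qed
    qed
  qed
qed

lemma TY_lim: "(\<lambda>l. TY l 1) \<longlonglongrightarrow> \<theta>"
proof -
  interpret N: prob_space N by (rule probN)
  have "(\<lambda>l. measure N (TYset l 1)) \<longlonglongrightarrow> measure N (\<Inter>l. TYset l 1)"
  proof (rule Lim_measure_decseq)
    show "range (\<lambda>l. TYset l 1) \<subseteq> sets N" by auto
    show "decseq (\<lambda>l. TYset l 1)" unfolding decseq_def TYset_def by auto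
  qed simp
  moreover have "(\<Inter>l. TYset l 1) = {\<omega>\<in>space N. \<forall>j::int. j \<le> -1 \<longrightarrow> nrm (Y \<omega> j) \<le> 1}"
  proof (intro set_eqI iffI)
    fix \<omega> assume o: "\<omega> \<in> (\<Inter>l. TYset l 1)"
    have "nrm (Y \<omega> j) \<le> 1" if "j \<le> -1" for j
    proof -
      have "\<omega> \<in> TYset (nat (-j)) 1" using o by auto
      then show ?thesis using that unfolding TYset_def by (auto dest!: spec[of _ "-j"])
    qed
    moreover have "\<omega> \<in> space N" using o unfolding TYset_def by auto
    ultimately show "\<omega> \<in> {\<omega>\<in>space N. \<forall>j::int. j \<le> -1 \<longrightarrow> nrm (Y \<omega> j) \<le> 1}" by auto
  next
    fix \<omega> assume "\<omega> \<in> {\<omega>\<in>space N. \<forall>j::int. j \<le> -1 \<longrightarrow> nrm (Y \<omega> j) \<le> 1}"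
    then show "\<omega> \<in> (\<Inter>l. TYset l 1)" unfolding TYset_def by auto
  qed
  ultimately show ?thesis unfolding TY_def \<theta>_def theta_tail_def by simp
qed

end


lemma bdd_integrable:
  fixes f :: "'x \<Rightarrow> real"
  assumes "prob_space M'" "f \<in> borel_measurable M'" "\<And>x. \<bar>f x\<bar> \<le> B"
  shows "integrable M' f"
proof -
  interpret prob_space M' by (rule assms(1))
  show ?thesis by (rule integrable_const_bound[where B=B]) (use assms in auto)
qed

lemma coord_cont[continuous_intros]: "continuous_on S (\<lambda>z::int \<Rightarrow> 'v::topological_space. z k)"
  by (rule continuous_on_subset[OF continuous_on_product_coordinates]) simp

context mainloc begin

lemma nrm_cont[continuous_intros]: "continuous_on S f \<Longrightarrow> continuous_on S (\<lambda>x. nrm (f x))"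
  by (rule continuous_on_compose2[OF is_norm_continuous[OF nrm]]) auto

lemma nrm_scale: "x > 0 \<Longrightarrow> nrm (inverse x *\<^sub>R v) = nrm v / x"
  using is_normD(3)[OF nrm, of "inverse x" v] by (simp add: field_simps)

lemma nrm_nonneg: "0 \<le> nrm v" using is_normD(2)[OF nrm] by blast

lemma tail_lim:
  assumes "i \<le> j" "\<And>z. 0 \<le> g z" "\<And>z. g z \<le> 1" "continuous_on UNIV g"
    "\<And>z z'. (\<forall>l\<in>{i..j}. z l = z' l) \<Longrightarrow> g z = g z'"
  shows "((\<lambda>x. (\<integral>\<omega>. indicator (W0 x) \<omega> * g (\<lambda>l. inverse x *\<^sub>R X \<omega> l) \<partial>M) / measure M (W0 x))
           \<longlongrightarrow> (\<integral>\<omega>. g (Y \<omega>) \<partial>N)) at_top"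
proof -
  have b: "bounded (range g)"
    unfolding bounded_iff using assms(2,3) by (intro exI[of _ 1]) (auto simp: abs_le_iff intro: order_trans[OF _ assms(2)])
  have dep: "\<forall>z z'. (\<forall>l\<in>{i..j}. z l = z' l) \<longrightarrow> g z = g z'" using assms(5) by blast
  have "\<forall>i j. i \<le> j \<longrightarrow>
       (\<forall>g :: (int \<Rightarrow> real ^ 'd) \<Rightarrow> real.
          bounded (range g) \<longrightarrow> continuous_on UNIV g \<longrightarrow>
          (\<forall>z z'. (\<forall>l\<in>{i..j}. z l = z' l) \<longrightarrow> g z = g z') \<longrightarrow>
          ((\<lambda>x::real. (\<integral>\<omega>. indicator {\<omega>\<in>space M. nrm (X \<omega> 0) > x} \<omega>
                                 * g (\<lambda>l. inverse x *\<^sub>R X \<omega> l) \<partial>M)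
                       / measure M {\<omega>\<in>space M. nrm (X \<omega> 0) > x})
            \<longlongrightarrow> (\<integral>\<omega>. g (Y \<omega>) \<partial>N)) at_top)"
    using tail unfolding is_tail_process_def by (rule conjunct2)
  then have "((\<lambda>x::real. (\<integral>\<omega>. indicator {\<omega>\<in>space M. nrm (X \<omega> 0) > x} \<omega>
                                 * g (\<lambda>l. inverse x *\<^sub>R X \<omega> l) \<partial>M)
                       / measure M {\<omega>\<in>space M. nrm (X \<omega> 0) > x})
            \<longlongrightarrow> (\<integral>\<omega>. g (Y \<omega>) \<partial>N)) at_top"
    using assms(1,4) b dep by simp
  then show ?thesis unfolding W0_eq .
qed

definition "g0 d c z = hh d (nrm (z (0::int)) - c)"

lemma Y0tail:
  assumes "c \<ge> 1" "d > 0"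
  shows "measure N {\<omega>\<in>space N. nrm (Y \<omega> 0) > c} \<ge> (c + d) powr (-\<alpha>)"
proof -
  interpret N: prob_space N by (rule probN)
  interpret prob_space M by (rule prob)
  have lim: "((\<lambda>x. (\<integral>\<omega>. indicator (W0 x) \<omega> * g0 d c (\<lambda>l. inverse x *\<^sub>R X \<omega> l) \<partial>M) / measure M (W0 x))
           \<longlongrightarrow> (\<integral>\<omega>. g0 d c (Y \<omega>) \<partial>N)) at_top"
  proof (rule tail_lim[of 0 0])
    show "continuous_on UNIV (g0 d c)" unfolding g0_def by (intro continuous_intros)
  qed (use assms in \<open>auto simp: g0_def hh_props(1,2,4)\<close>)
  have lim2: "((\<lambda>x. measure M (W0 (x * (c + d))) / measure M (W0 x)) \<longlongrightarrow> (c + d) powr (-\<alpha>)) at_top"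
    using RV[of "c + d"] assms unfolding W0_eq by simp
  have le: "(c + d) powr (-\<alpha>) \<le> (\<integral>\<omega>. g0 d c (Y \<omega>) \<partial>N)"
  proof (rule tendsto_le[OF _ lim lim2])
    show "eventually (\<lambda>x. measure M (W0 (x * (c + d))) / measure M (W0 x)
       \<le> (\<integral>\<omega>. indicator (W0 x) \<omega> * g0 d c (\<lambda>l. inverse x *\<^sub>R X \<omega> l) \<partial>M) / measure M (W0 x)) at_top"
      using eventually_gt_at_top[of 0]
    proof eventually_elim
      case (elim x)
      have "measure M (W0 (x * (c + d))) = (\<integral>\<omega>. indicator (W0 (x * (c + d))) \<omega> \<partial>M)"
        by (simp add: Int_absorb2 W0_def)
      also have "\<dots> \<le> (\<integral>\<omega>. indicator (W0 x) \<omega> * g0 d c (\<lambda>l. inverse x *\<^sub>R X \<omega> l) \<partial>M)"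
      proof (rule integral_mono)
        show "integrable M (indicator (W0 (x * (c + d))) :: _ \<Rightarrow> real)"
          by (rule integrable_real_indicator) (auto simp: less_top[symmetric])
        show "integrable M (\<lambda>\<omega>. indicator (W0 x) \<omega> * g0 d c (\<lambda>l. inverse x *\<^sub>R X \<omega> l))"
          by (rule bdd_integrable[OF prob, where B=1]) (unfold g0_def, measurable, use assms hh_props(1,2)[OF assms(2)] in \<open>simp add: indicator_def abs_le_iff order_trans[OF _ hh_props(1)[OF assms(2)]]\<close>)
        fix \<omega> assume o: "\<omega> \<in> space M"
        show "indicator (W0 (x * (c + d))) \<omega> \<le> indicator (W0 x) \<omega> * g0 d c (\<lambda>l. inverse x *\<^sub>R X \<omega> l)"
        proof (cases "\<omega> \<in> W0 (x * (c + d))")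
          case True
          then have t: "nrm (X \<omega> 0) > x * (c + d)" unfolding W0_def by auto
          have "x * (c + d) \<ge> x" using elim assms by simp
          then have "\<omega> \<in> W0 x" using t o unfolding W0_def by auto
          moreover have "nrm (X \<omega> 0) / x - c \<ge> d" using t elim by (simp add: field_simps)
          ultimately show ?thesis using True elim assms by (simp add: g0_def nrm_scale hh_props(1,2,4))
        next
          case False
          then show ?thesis using assms by (simp add: g0_def hh_props(1,2,4))
        qed
      qed
      finally show ?case using Wpos[of x] unfolding W0_eq by (simp add: divide_right_mono)
    qed
  qed simp
  have "(\<integral>\<omega>. g0 d c (Y \<omega>) \<partial>N) \<le> (\<integral>\<omega>. indicator {\<omega>\<in>space N. nrm (Y \<omega> 0) > c} \<omega> \<partial>N)"
  proof (rule integral_mono)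
    show "integrable N (\<lambda>\<omega>. g0 d c (Y \<omega>))"
      by (rule bdd_integrable[OF probN, where B=1]) (unfold g0_def, measurable, use assms in \<open>auto simp: hh_props(1,2,4)\<close>)
    show "integrable N (indicator {\<omega>\<in>space N. nrm (Y \<omega> 0) > c} :: _ \<Rightarrow> real)"
      by (rule integrable_real_indicator) (auto simp: less_top[symmetric])
    fix \<omega> assume o: "\<omega> \<in> space N"
    show "g0 d c (Y \<omega>) \<le> indicator {\<omega>\<in>space N. nrm (Y \<omega> 0) > c} \<omega>"
    proof (cases "nrm (Y \<omega> 0) > c")
      case True then show ?thesis using o assms by (simp add: g0_def hh_props(1,2,4))
    next
      case False
      then have "g0 d c (Y \<omega>) \<le> 0" using hh_props(3)[OF assms(2), of "nrm (Y \<omega> 0) - c"] unfolding g0_def by force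
      then show ?thesis using False by simp
    qed
  qed
  also have "\<dots> = measure N {\<omega>\<in>space N. nrm (Y \<omega> 0) > c}" by (simp add: Int_absorb2)
  finally show ?thesis using le by simp
qed

end


lemma hh_zero: "t \<le> 0 \<Longrightarrow> d > 0 \<Longrightarrow> hh d t = 0"
  unfolding hh_def by (simp add: divide_nonpos_pos)

lemma prod_hh_01:
  assumes "d > 0"
  shows "0 \<le> (\<Prod>k\<in>K. hh d (f k))" "(\<Prod>k\<in>K. hh d (f k)) \<le> 1"
  using hh_props(1,2)[OF assms] by (auto intro: prod_nonneg prod_le_1)

lemma prod_hh_1:
  assumes "d > 0" "\<And>k. k \<in> K \<Longrightarrow> f k \<ge> d"
  shows "(\<Prod>k\<in>K. hh d (f k)) = 1"
  using hh_props(4)[OF assms(1)] assms(2) by (intro prod.neutral) auto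

lemma prod_hh_pos:
  assumes "d > 0" "finite K" "(\<Prod>k\<in>K. hh d (f k)) > 0" "k \<in> K"
  shows "f k > 0"
proof (rule ccontr)
  assume "\<not> f k > 0"
  then have "hh d (f k) = 0" using hh_zero[of "f k" d] assms(1) by simp
  then have "(\<Prod>k\<in>K. hh d (f k)) = 0" using assms(2,4) by (intro prod_zero) auto
  then show False using assms(3) by simp
qed

context mainloc begin

definition "gU d l z = (\<Prod>k\<in>{1..int l}. hh d (1 + d - nrm (z (-k))))"

lemma gU_01: "d > 0 \<Longrightarrow> 0 \<le> gU d l z \<and> gU d l z \<le> 1"
  unfolding gU_def by (intro conjI prod_hh_01)

lemma gU_bd: "d > 0 \<Longrightarrow> \<bar>gU d l z\<bar> \<le> 1" "d > 0 \<Longrightarrow> \<bar>(indicator A x :: real) * gU d l z\<bar> \<le> 1"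
  using gU_01[of d l z] by (auto simp: indicator_def)

lemma a_upper:
  assumes d: "d > 0" and e: "\<epsilon> > 0"
  shows "eventually (\<lambda>n. a n l \<le> TY l (1 + d) + \<epsilon>) sequentially"
proof -
  interpret N: prob_space N by (rule probN)
  interpret prob_space M by (rule prob)
  define F where "F x = (\<integral>\<omega>. indicator (W0 x) \<omega> * gU d l (\<lambda>l. inverse x *\<^sub>R X \<omega> l) \<partial>M) / measure M (W0 x)" for x
  define L where "L = (\<integral>\<omega>. gU d l (Y \<omega>) \<partial>N)"
  have lim: "(F \<longlongrightarrow> L) at_top"
    unfolding F_def L_def
  proof (rule tail_lim[of "- int l" 0])
    show "continuous_on UNIV (gU d l)" unfolding gU_def by (intro continuous_intros)
    show "gU d l z = gU d l z'" if "\<forall>l'\<in>{- int l..0}. z l' = z' l'" for z z'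
      unfolding gU_def using that by (intro prod.cong) auto
  qed (use d in \<open>auto simp: gU_def prod_hh_01\<close>)
  have limu: "(\<lambda>n. F (u n)) \<longlonglongrightarrow> L" by (rule filterlim_compose[OF lim ulim])
  have LT: "L \<le> TY l (1 + d)"
  proof -
    have "L \<le> (\<integral>\<omega>. indicator (TYset l (1 + d)) \<omega> \<partial>N)"
      unfolding L_def
    proof (rule integral_mono)
      show "integrable N (\<lambda>\<omega>. gU d l (Y \<omega>))"
      proof (rule bdd_integrable[OF probN, where B=1])
        show "(\<lambda>\<omega>. gU d l (Y \<omega>)) \<in> borel_measurable N" unfolding gU_def by measurable
      qed (rule gU_bd(1)[OF d])
      show "integrable N (indicator (TYset l (1 + d)) :: _ \<Rightarrow> real)"
        by (rule integrable_real_indicator) (auto simp: less_top[symmetric])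
      fix \<omega> assume o: "\<omega> \<in> space N"
      show "gU d l (Y \<omega>) \<le> indicator (TYset l (1 + d)) \<omega>"
      proof (cases "gU d l (Y \<omega>) > 0")
        case True
        have "nrm (Y \<omega> (-k)) \<le> 1 + d" if "1 \<le> k" "k \<le> int l" for k
          using prod_hh_pos[OF d _ True[unfolded gU_def], of k] that by simp
        then have "\<omega> \<in> TYset l (1 + d)" using o unfolding TYset_def by auto
        then show ?thesis using prod_hh_01(2)[OF d] by (simp add: gU_def)
      next
        case False
        then have "gU d l (Y \<omega>) \<le> 0" by simp
        moreover have "0 \<le> (indicator (TYset l (1 + d)) \<omega> :: real)" by simp
        ultimately show ?thesis by linarith
      qed
    qed
    then show ?thesis unfolding TY_def by (simp add: Int_absorb2 sets.sets_into_space)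
  qed
  have aF: "a n l \<le> F (u n)" for n
  proof -
    have "measure M (Bk (u n) l) = (\<integral>\<omega>. indicator (Bk (u n) l) \<omega> \<partial>M)"
      by (simp add: Int_absorb2 sets.sets_into_space)
    also have "\<dots> \<le> (\<integral>\<omega>. indicator (W0 (u n)) \<omega> * gU d l (\<lambda>l. inverse (u n) *\<^sub>R X \<omega> l) \<partial>M)"
    proof (rule integral_mono)
      show "integrable M (indicator (Bk (u n) l) :: _ \<Rightarrow> real)"
        by (rule integrable_real_indicator) (auto simp: less_top[symmetric])
      show "integrable M (\<lambda>\<omega>. indicator (W0 (u n)) \<omega> * gU d l (\<lambda>l. inverse (u n) *\<^sub>R X \<omega> l))"
      proof (rule bdd_integrable[OF prob, where B=1])
        show "(\<lambda>\<omega>. indicator (W0 (u n)) \<omega> * gU d l (\<lambda>l. inverse (u n) *\<^sub>R X \<omega> l)) \<in> borel_measurable M"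
          unfolding gU_def by measurable
      qed (rule gU_bd(2)[OF d])
      fix \<omega> assume o: "\<omega> \<in> space M"
      show "indicator (Bk (u n) l) \<omega> \<le> indicator (W0 (u n)) \<omega> * gU d l (\<lambda>l. inverse (u n) *\<^sub>R X \<omega> l)"
      proof (cases "\<omega> \<in> Bk (u n) l")
        case True
        then have w: "\<omega> \<in> W0 (u n)" using Bk_sub by auto
        have "gU d l (\<lambda>l. inverse (u n) *\<^sub>R X \<omega> l) = 1"
          unfolding gU_def
        proof (rule prod_hh_1[OF d])
          fix k assume k: "k \<in> {1..int l}"
          then have "nrm (X \<omega> (-k)) \<le> u n" using True unfolding Bk_def by auto
          then have "nrm (X \<omega> (-k)) / u n \<le> 1" using upos[of n] by simp
          then show "d \<le> 1 + d - nrm (inverse (u n) *\<^sub>R X \<omega> (-k))"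
            using nrm_scale[OF upos[of n]] by simp
        qed
        then show ?thesis using True w by simp
      next
        case False
        have "0 \<le> gU d l (\<lambda>l. inverse (u n) *\<^sub>R X \<omega> l)" using gU_01[OF d] by blast
        then have "0 \<le> indicator (W0 (u n)) \<omega> * gU d l (\<lambda>l. inverse (u n) *\<^sub>R X \<omega> l)"
          by (intro mult_nonneg_nonneg) auto
        then show ?thesis using False by simp
      qed
    qed
    finally show ?thesis unfolding a_def F_def w_def using wpos[of n] unfolding w_def
      by (simp add: divide_right_mono)
  qed
  have "eventually (\<lambda>n. F (u n) < L + \<epsilon>) sequentially"
    by (rule order_tendstoD(2)[OF limu]) (use e in simp)
  then show ?thesis
  proof (rule eventually_mono)
    fix n assume "F (u n) < L + \<epsilon>"
    then show "a n l \<le> TY l (1 + d) + \<epsilon>" using aF[of n] LT by linarith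
  qed
qed

end


context mainloc begin

definition "gL d c l z = (\<Prod>k\<in>{1..int l}. hh d (c - nrm (z (-k)))) * hh d (nrm (z 0) - c)"

lemma gL_01: "d > 0 \<Longrightarrow> 0 \<le> gL d c l z \<and> gL d c l z \<le> 1"
  unfolding gL_def
  by (intro conjI mult_nonneg_nonneg mult_le_one prod_hh_01 hh_props(1,2))

lemma gL_bd: "d > 0 \<Longrightarrow> \<bar>gL d c l z\<bar> \<le> 1" "d > 0 \<Longrightarrow> \<bar>(indicator A x :: real) * gL d c l z\<bar> \<le> 1"
  using gL_01[of d c l z] by (auto simp: indicator_def)

lemma gL_pos:
  assumes d: "d > 0" and pos: "gL d c l z > 0"
  shows "nrm (z 0) > c" "\<And>k. 1 \<le> k \<Longrightarrow> k \<le> int l \<Longrightarrow> nrm (z (-k)) < c"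
proof -
  have p1: "0 \<le> (\<Prod>k\<in>{1..int l}. hh d (c - nrm (z (-k))))" by (rule prod_hh_01(1)[OF d])
  have p2: "0 \<le> hh d (nrm (z 0) - c)" by (rule hh_props(1)[OF d])
  have "(\<Prod>k\<in>{1..int l}. hh d (c - nrm (z (-k)))) > 0 \<and> hh d (nrm (z 0) - c) > 0"
    using pos p1 p2 unfolding gL_def by (simp add: zero_less_mult_iff)
  then have q1: "(\<Prod>k\<in>{1..int l}. hh d (c - nrm (z (-k)))) > 0" and q2: "hh d (nrm (z 0) - c) > 0"
    by auto
  show "nrm (z 0) > c" using hh_props(3)[OF d q2] by simp
  fix k :: int assume "1 \<le> k" "k \<le> int l"
  then show "nrm (z (-k)) < c" using prod_hh_pos[OF d _ q1, of k] by simp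
qed

lemma a_lower:
  assumes d: "d > 0" and e: "\<epsilon> > 0"
  shows "eventually (\<lambda>n. a n l \<ge> TY l 1 + measure N {\<omega>\<in>space N. nrm (Y \<omega> 0) > 1 + 3 * d} - 1 - \<epsilon>) sequentially"
proof -
  interpret N: prob_space N by (rule probN)
  interpret prob_space M by (rule prob)
  define c where "c = 1 + 2 * d"
  have c: "c > 0" "c \<ge> 1" using d unfolding c_def by auto
  define G where "G x = (\<integral>\<omega>. indicator (W0 x) \<omega> * gL d c l (\<lambda>l. inverse x *\<^sub>R X \<omega> l) \<partial>M) / measure M (W0 x)" for x
  define L where "L = (\<integral>\<omega>. gL d c l (Y \<omega>) \<partial>N)"
  define Z where "Z = {\<omega>\<in>space N. nrm (Y \<omega> 0) > 1 + 3 * d}"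
  have Zs[measurable]: "Z \<in> sets N" unfolding Z_def by measurable
  have lim: "(G \<longlongrightarrow> L) at_top"
    unfolding G_def L_def
  proof (rule tail_lim[of "- int l" 0])
    show "continuous_on UNIV (gL d c l)" unfolding gL_def by (intro continuous_intros)
    show "gL d c l z = gL d c l z'" if "\<forall>l'\<in>{- int l..0}. z l' = z' l'" for z z'
    proof -
      have "(\<Prod>k\<in>{1..int l}. hh d (c - nrm (z (-k)))) = (\<Prod>k\<in>{1..int l}. hh d (c - nrm (z' (-k))))"
        using that by (intro prod.cong) auto
      moreover have "z 0 = z' 0" using that by auto
      ultimately show ?thesis unfolding gL_def by simp
    qed
  qed (use gL_01[OF d] in auto)
  define v where "v n = inverse c * u n" for n
  have vpos: "v n > 0" for n unfolding v_def using c upos[of n] by simp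
  have vc: "v n * c = u n" for n unfolding v_def using c by simp
  have vlim: "filterlim v at_top sequentially"
    unfolding v_def by (rule filterlim_tendsto_pos_mult_at_top[OF tendsto_const _ ulim]) (use c in simp)
  have Gv: "(\<lambda>n. G (v n)) \<longlonglongrightarrow> L" by (rule filterlim_compose[OF lim vlim])
  have RVc: "((\<lambda>x. measure M (W0 (x * c)) / measure M (W0 x)) \<longlongrightarrow> c powr (-\<alpha>)) at_top"
    using RV[of c] c unfolding W0_eq by simp
  have "(\<lambda>n. measure M (W0 (v n * c)) / measure M (W0 (v n))) \<longlonglongrightarrow> c powr (-\<alpha>)"
    by (rule filterlim_compose[OF RVc vlim])
  then have "(\<lambda>n. inverse (measure M (W0 (v n * c)) / measure M (W0 (v n)))) \<longlonglongrightarrow> inverse (c powr (-\<alpha>))"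
    by (rule tendsto_inverse) (use c in simp)
  then have rho: "(\<lambda>n. measure M (W0 (v n)) / w n) \<longlonglongrightarrow> c powr \<alpha>"
    unfolding vc w_def using c by (simp add: powr_minus)
  have prodlim: "(\<lambda>n. G (v n) * (measure M (W0 (v n)) / w n)) \<longlonglongrightarrow> L * c powr \<alpha>"
    by (intro tendsto_mult Gv rho)
  have Gbound: "G (v n) \<le> measure M (Bk (u n) l) / measure M (W0 (v n))" for n
  proof -
    have "(\<integral>\<omega>. indicator (W0 (v n)) \<omega> * gL d c l (\<lambda>l. inverse (v n) *\<^sub>R X \<omega> l) \<partial>M)
        \<le> (\<integral>\<omega>. indicator (Bk (u n) l) \<omega> \<partial>M)"
    proof (rule integral_mono)
      show "integrable M (indicator (Bk (u n) l) :: _ \<Rightarrow> real)"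
        by (rule integrable_real_indicator) (auto simp: less_top[symmetric])
      show "integrable M (\<lambda>\<omega>. indicator (W0 (v n)) \<omega> * gL d c l (\<lambda>l. inverse (v n) *\<^sub>R X \<omega> l))"
      proof (rule bdd_integrable[OF prob, where B=1])
        show "(\<lambda>\<omega>. indicator (W0 (v n)) \<omega> * gL d c l (\<lambda>l. inverse (v n) *\<^sub>R X \<omega> l)) \<in> borel_measurable M"
          unfolding gL_def by measurable
      qed (rule gL_bd(2)[OF d])
      fix \<omega> assume o: "\<omega> \<in> space M"
      show "indicator (W0 (v n)) \<omega> * gL d c l (\<lambda>l. inverse (v n) *\<^sub>R X \<omega> l) \<le> indicator (Bk (u n) l) \<omega>"
      proof (cases "gL d c l (\<lambda>l. inverse (v n) *\<^sub>R X \<omega> l) > 0")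
        case True
        note gp = gL_pos[OF d True]
        have "nrm (X \<omega> 0) / v n > c" using gp(1) nrm_scale[OF vpos[of n]] by simp
        then have b0: "nrm (X \<omega> 0) > u n" using vpos[of n] vc[of n] by (simp add: field_simps)
        have bk: "nrm (X \<omega> (-k)) \<le> u n" if "1 \<le> k" "k \<le> int l" for k
        proof -
          have "nrm (X \<omega> (-k)) / v n < c" using gp(2)[OF that] nrm_scale[OF vpos[of n]] by simp
          then show ?thesis using vpos[of n] vc[of n] by (simp add: field_simps)
        qed
        have "\<omega> \<in> Bk (u n) l" using o b0 bk unfolding Bk_def by auto
        moreover have "indicator (W0 (v n)) \<omega> * gL d c l (\<lambda>l. inverse (v n) *\<^sub>R X \<omega> l) \<le> 1"
          using gL_bd(2)[OF d, of "W0 (v n)" \<omega> c l "\<lambda>l. inverse (v n) *\<^sub>R X \<omega> l"] by (simp only: abs_le_iff)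
        ultimately show ?thesis by simp
      next
        case False
        moreover have "0 \<le> gL d c l (\<lambda>l. inverse (v n) *\<^sub>R X \<omega> l)" using gL_01[OF d] by blast
        ultimately have "gL d c l (\<lambda>l. inverse (v n) *\<^sub>R X \<omega> l) = 0" by linarith
        then show ?thesis by simp
      qed
    qed
    also have "\<dots> = measure M (Bk (u n) l)" by (simp add: Int_absorb2 sets.sets_into_space)
    finally show ?thesis unfolding G_def using Wpos[of "v n"] unfolding W0_eq
      by (simp add: divide_right_mono)
  qed
  have aG: "a n l \<ge> G (v n) * (measure M (W0 (v n)) / w n)" for n
  proof -
    have pv: "measure M (W0 (v n)) > 0" using Wpos[of "v n"] unfolding W0_eq .
    have "G (v n) * (measure M (W0 (v n)) / w n)
        \<le> (measure M (Bk (u n) l) / measure M (W0 (v n))) * (measure M (W0 (v n)) / w n)"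
      by (rule mult_right_mono[OF Gbound]) (use pv wpos[of n] in simp)
    also have "\<dots> = a n l" unfolding a_def using pv by simp
    finally show ?thesis .
  qed
  have L0: "L \<ge> 0" unfolding L_def using gL_01[OF d] by (intro integral_nonneg_AE) auto
  have cpow: "c powr \<alpha> \<ge> 1" using c alpha by (intro ge_one_powr_ge_zero) auto
  have LL: "L * c powr \<alpha> \<ge> L" using L0 cpow mult_left_mono[OF cpow L0] by simp
  have LT: "L \<ge> TY l 1 + measure N Z - 1"
  proof -
    have "(\<integral>\<omega>. indicator (TYset l 1 \<inter> Z) \<omega> \<partial>N) \<le> L"
      unfolding L_def
    proof (rule integral_mono)
      show "integrable N (\<lambda>\<omega>. gL d c l (Y \<omega>))"
      proof (rule bdd_integrable[OF probN, where B=1])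
        show "(\<lambda>\<omega>. gL d c l (Y \<omega>)) \<in> borel_measurable N" unfolding gL_def by measurable
      qed (rule gL_bd(1)[OF d])
      show "integrable N (indicator (TYset l 1 \<inter> Z) :: _ \<Rightarrow> real)"
        by (rule integrable_real_indicator) (auto simp: less_top[symmetric])
      fix \<omega> assume o: "\<omega> \<in> space N"
      show "indicator (TYset l 1 \<inter> Z) \<omega> \<le> gL d c l (Y \<omega>)"
      proof (cases "\<omega> \<in> TYset l 1 \<inter> Z")
        case True
        have p: "(\<Prod>k\<in>{1..int l}. hh d (c - nrm (Y \<omega> (-k)))) = 1"
        proof (rule prod_hh_1[OF d])
          fix k assume "k \<in> {1..int l}"
          then have "nrm (Y \<omega> (-k)) \<le> 1" using True unfolding TYset_def by auto
          then show "d \<le> c - nrm (Y \<omega> (-k))" unfolding c_def using d by simp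
        qed
        have "nrm (Y \<omega> 0) > 1 + 3 * d" using True unfolding Z_def by auto
        then have "hh d (nrm (Y \<omega> 0) - c) = 1" unfolding c_def by (intro hh_props(4)[OF d]) simp
        then show ?thesis using p True unfolding gL_def by simp
      next
        case False
        then show ?thesis using gL_01[OF d] by simp
      qed
    qed
    moreover have "(\<integral>\<omega>. indicator (TYset l 1 \<inter> Z) \<omega> \<partial>N) = measure N (TYset l 1 \<inter> Z)"
      by (simp add: Int_absorb2 sets.sets_into_space)
    moreover have "measure N (TYset l 1 \<union> Z) = measure N (TYset l 1) + measure N Z - measure N (TYset l 1 \<inter> Z)"
      by (rule measure_Un3) (auto simp: N.fmeasurable_eq_sets)
    moreover have "measure N (TYset l 1 \<union> Z) \<le> 1" by (rule N.prob_le_1)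
    ultimately show ?thesis unfolding TY_def by linarith
  qed
  have "eventually (\<lambda>n. G (v n) * (measure M (W0 (v n)) / w n) > L * c powr \<alpha> - \<epsilon>) sequentially"
    by (rule order_tendstoD(1)[OF prodlim]) (use e in simp)
  then show ?thesis
  proof (rule eventually_mono)
    fix n assume "G (v n) * (measure M (W0 (v n)) / w n) > L * c powr \<alpha> - \<epsilon>"
    then show "a n l \<ge> TY l 1 + measure N {\<omega>\<in>space N. nrm (Y \<omega> 0) > 1 + 3 * d} - 1 - \<epsilon>"
      using aG[of n] LL LT unfolding Z_def by linarith
  qed
qed

end


lemma sum_reflect: "(\<Sum>m<R. g (R - Suc m)) = (\<Sum>m<R. (g m :: real))"
  using sum.atLeastLessThan_rev[of g 0 R] by (simp add: lessThan_atLeast0)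

lemma sum_int_shift: "(\<Sum>i\<in>{1..int R}. F i) = (\<Sum>m<R. (F (int m + 1) :: real))"
proof (induction R)
  case 0 then show ?case by simp
next
  case (Suc R)
  have "{1..int (Suc R)} = insert (int R + 1) {1..int R}" by auto
  then show ?case using Suc by simp
qed

context mainloc begin

lemma inv_suc_pos: "inverse (real (Suc j)) > 0" by simp

lemma TY_dec_lim: "(\<lambda>j. TY l (1 + inverse (real (Suc j)))) \<longlonglongrightarrow> TY l 1"
proof -
  interpret N: prob_space N by (rule probN)
  have "(\<lambda>j. measure N (TYset l (1 + inverse (real (Suc j))))) \<longlonglongrightarrow> measure N (\<Inter>j. TYset l (1 + inverse (real (Suc j))))"
  proof (rule Lim_measure_decseq)
    show "range (\<lambda>j. TYset l (1 + inverse (real (Suc j)))) \<subseteq> sets N" by auto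
    show "decseq (\<lambda>j. TYset l (1 + inverse (real (Suc j))))"
    proof (rule decseq_SucI)
      fix j
      have "inverse (real (Suc (Suc j))) \<le> inverse (real (Suc j))" by (simp add: field_simps)
      then have h: "1 + inverse (real (Suc (Suc j))) \<le> 1 + inverse (real (Suc j))" by simp
      show "TYset l (1 + inverse (real (Suc (Suc j)))) \<subseteq> TYset l (1 + inverse (real (Suc j)))"
      proof
        fix \<omega> assume "\<omega> \<in> TYset l (1 + inverse (real (Suc (Suc j))))"
        then have o: "\<omega> \<in> space N" "\<And>k. 1 \<le> k \<Longrightarrow> k \<le> int l \<Longrightarrow> nrm (Y \<omega> (- k)) \<le> 1 + inverse (real (Suc (Suc j)))"
          unfolding TYset_def by auto
        have "nrm (Y \<omega> (- k)) \<le> 1 + inverse (real (Suc j))" if "1 \<le> k" "k \<le> int l" for k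
          using o(2)[OF that] h by linarith
        then show "\<omega> \<in> TYset l (1 + inverse (real (Suc j)))" using o(1) unfolding TYset_def by auto
      qed
    qed
  qed simp
  moreover have "(\<Inter>j. TYset l (1 + inverse (real (Suc j)))) = TYset l 1"
  proof (intro set_eqI iffI)
    fix \<omega> assume o: "\<omega> \<in> (\<Inter>j. TYset l (1 + inverse (real (Suc j))))"
    have "nrm (Y \<omega> (-k)) \<le> 1" if k: "1 \<le> k" "k \<le> int l" for k
    proof (rule ccontr)
      assume "\<not> nrm (Y \<omega> (-k)) \<le> 1"
      then have "nrm (Y \<omega> (-k)) - 1 > 0" by simp
      then obtain j where j: "j > 0" "inverse (real j) < nrm (Y \<omega> (-k)) - 1"
        using ex_inverse_of_nat_less by blast
      have "inverse (real (Suc j)) \<le> inverse (real j)" using j(1) by (simp add: field_simps)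
      moreover have "\<omega> \<in> TYset l (1 + inverse (real (Suc j)))" using o by blast
      then have "nrm (Y \<omega> (-k)) \<le> 1 + inverse (real (Suc j))" using k unfolding TYset_def by blast
      ultimately show False using j(2) by linarith
    qed
    moreover have "\<omega> \<in> space N" using o unfolding TYset_def by blast
    ultimately show "\<omega> \<in> TYset l 1" unfolding TYset_def by blast
  next
    fix \<omega> assume "\<omega> \<in> TYset l 1"
    then show "\<omega> \<in> (\<Inter>j. TYset l (1 + inverse (real (Suc j))))"
      unfolding TYset_def by (auto intro: order_trans[of _ 1])
  qed
  ultimately show ?thesis unfolding TY_def by simp
qed

lemma a_lim: "(\<lambda>n. a n l) \<longlonglongrightarrow> TY l 1"
  unfolding tendsto_iff dist_real_def
proof (intro allI impI)
  fix e :: real assume e: "e > 0"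
  have e2: "e / 2 > 0" using e by simp
  have "eventually (\<lambda>j. TY l (1 + inverse (real (Suc j))) < TY l 1 + e / 2) sequentially"
    by (rule order_tendstoD(2)[OF TY_dec_lim]) (use e in simp)
  then obtain j1 where j1: "TY l (1 + inverse (real (Suc j1))) < TY l 1 + e / 2"
    by (auto simp: eventually_sequentially)
  have up: "eventually (\<lambda>n. a n l \<le> TY l (1 + inverse (real (Suc j1))) + e / 2) sequentially"
    by (rule a_upper[OF inv_suc_pos e2])
  have "(\<lambda>j. 1 + 4 * inverse (real (Suc j))) \<longlonglongrightarrow> 1 + 4 * 0"
    by (intro tendsto_intros LIMSEQ_inverse_real_of_nat)
  then have "(\<lambda>j. (1 + 4 * inverse (real (Suc j))) powr (-\<alpha>)) \<longlonglongrightarrow> (1 + 4 * 0) powr (-\<alpha>)"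
    by (intro tendsto_powr tendsto_const) auto
  then have "eventually (\<lambda>j. (1 + 4 * inverse (real (Suc j))) powr (-\<alpha>) > 1 - e / 2) sequentially"
    by (rule order_tendstoD(1)) (use e in simp)
  then obtain j2 where j2: "(1 + 4 * inverse (real (Suc j2))) powr (-\<alpha>) > 1 - e / 2"
    by (auto simp: eventually_sequentially)
  define d where "d = inverse (real (Suc j2))"
  have d: "d > 0" unfolding d_def by simp
  have Z: "measure N {\<omega>\<in>space N. nrm (Y \<omega> 0) > 1 + 3 * d} \<ge> (1 + 3 * d + d) powr (-\<alpha>)"
    by (rule Y0tail) (use d in auto)
  have Z2: "measure N {\<omega>\<in>space N. nrm (Y \<omega> 0) > 1 + 3 * d} > 1 - e / 2"
    using Z j2 unfolding d_def by (simp add: algebra_simps)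
  have low: "eventually (\<lambda>n. a n l \<ge> TY l 1 + measure N {\<omega>\<in>space N. nrm (Y \<omega> 0) > 1 + 3 * d} - 1 - e / 2) sequentially"
    by (rule a_lower[OF d e2])
  show "eventually (\<lambda>n. \<bar>a n l - TY l 1\<bar> < e) sequentially"
    using up low
  proof eventually_elim
    case (elim n)
    then show ?case using j1 Z2 by (simp add: abs_less_iff)
  qed
qed

lemma theta01: "0 \<le> \<theta>" "\<theta> \<le> 1"
proof -
  interpret N: prob_space N by (rule probN)
  show "0 \<le> \<theta>" "\<theta> \<le> 1" unfolding \<theta>_def theta_tail_def by auto
qed

lemma K_a:
  assumes e: "\<epsilon> > 0"
  shows "\<exists>l. eventually (\<lambda>n. \<forall>m. l \<le> m \<longrightarrow> m < r n \<longrightarrow> \<bar>a n m - \<theta>\<bar> \<le> \<epsilon>) sequentially"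
proof -
  have e3: "\<epsilon> / 3 > 0" using e by simp
  obtain l0 where l0: "eventually (\<lambda>n. \<forall>m. l0 \<le> m \<longrightarrow> m \<le> r n \<longrightarrow> a n l0 - a n m < \<epsilon> / 3) sequentially"
    using a_close[OF e3] by blast
  have "eventually (\<lambda>l. \<bar>TY l 1 - \<theta>\<bar> < \<epsilon> / 3) sequentially"
    using tendsto_iff[THEN iffD1, OF TY_lim, rule_format, OF e3] by (simp add: dist_real_def)
  then obtain l1 where l1: "\<And>l. l \<ge> l1 \<Longrightarrow> \<bar>TY l 1 - \<theta>\<bar> < \<epsilon> / 3"
    by (auto simp: eventually_sequentially)
  define l where "l = max l0 l1"
  have lT: "\<bar>TY l 1 - \<theta>\<bar> < \<epsilon> / 3" using l1 unfolding l_def by simp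
  have ev1: "eventually (\<lambda>n. \<bar>a n l - TY l 1\<bar> < \<epsilon> / 3) sequentially"
    using tendsto_iff[THEN iffD1, OF a_lim[of l], rule_format, OF e3] by (simp add: dist_real_def)
  show ?thesis
  proof (intro exI[of _ l])
    show "eventually (\<lambda>n. \<forall>m. l \<le> m \<longrightarrow> m < r n \<longrightarrow> \<bar>a n m - \<theta>\<bar> \<le> \<epsilon>) sequentially"
      using l0 ev1
    proof eventually_elim
      case (elim n)
      show ?case
      proof (intro allI impI)
        fix m assume m: "l \<le> m" "m < r n"
        have "a n l0 - a n m < \<epsilon> / 3" using elim(1) m unfolding l_def by auto
        moreover have "a n l \<le> a n l0" by (rule a_mono) (simp add: l_def)
        moreover have "a n m \<le> a n l" by (rule a_mono[OF m(1)])
        moreover have "a n l - TY l 1 < \<epsilon> / 3" "TY l 1 - a n l < \<epsilon> / 3" using elim(2) unfolding abs_less_iff by linarith+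
        moreover have "TY l 1 - \<theta> < \<epsilon> / 3" "\<theta> - TY l 1 < \<epsilon> / 3" using lT unfolding abs_less_iff by linarith+
        ultimately show "\<bar>a n m - \<theta>\<bar> \<le> \<epsilon>" unfolding abs_le_iff by linarith
      qed
    qed
  qed
qed

lemma rinf: "filterlim (\<lambda>n. real (r n)) at_top sequentially"
  using filterlim_compose[OF filterlim_real_sequentially rlim] by simp

lemma inv_r_lim: "(\<lambda>n. 1 / real (r n)) \<longlonglongrightarrow> 0"
  by (rule tendsto_divide_0[OF tendsto_const filterlim_at_top_imp_at_infinity[OF rinf]])

lemma rpos': "real (r n) > 0" using rpos[of n] by simp

lemma lim_general:
  fixes c :: "nat \<Rightarrow> nat \<Rightarrow> real" and wt :: "nat \<Rightarrow> nat \<Rightarrow> real" and \<gamma> :: real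
  assumes g: "\<gamma> > 0"
    and c01: "\<And>n m. 0 \<le> c n m \<and> c n m \<le> 1"
    and K: "\<And>\<epsilon>. \<epsilon> > 0 \<Longrightarrow> \<exists>l. eventually (\<lambda>n. \<forall>m. l \<le> m \<longrightarrow> m < r n \<longrightarrow> \<bar>c n m - \<theta>\<bar> \<le> \<epsilon>) sequentially"
    and wt0: "\<And>n m. 0 \<le> wt n m" and wtr: "\<And>n m. m < r n \<Longrightarrow> wt n m \<le> real (r n) powr \<gamma>"
    and S: "(\<lambda>n. (\<Sum>m<r n. wt n m) / real (r n) powr (\<gamma> + 1)) \<longlonglongrightarrow> 1 / (\<gamma> + 1)"
  shows "(\<lambda>n. (\<Sum>m<r n. wt n m * c n m) / real (r n) powr (\<gamma> + 1)) \<longlonglongrightarrow> \<theta> / (\<gamma> + 1)"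
proof -
  have "(\<lambda>n. \<Sum>m<r n. (wt n m / real (r n) powr (\<gamma> + 1)) * c n m) \<longlonglongrightarrow> \<theta> * (1 / (\<gamma> + 1))"
  proof (rule weighted_conv[where B="\<lambda>n. 1 / real (r n)"])
    show "\<bar>c n m - \<theta>\<bar> \<le> 1" for n m using c01[of n m] theta01 by (simp add: abs_le_iff)
    show "0 \<le> wt n m / real (r n) powr (\<gamma> + 1)" for n m using wt0[of n m] by simp
    show "wt n m / real (r n) powr (\<gamma> + 1) \<le> 1 / real (r n)" if "m < r n" for n m
    proof -
      have "wt n m / real (r n) powr (\<gamma> + 1) \<le> real (r n) powr \<gamma> / real (r n) powr (\<gamma> + 1)"
        by (rule divide_right_mono[OF wtr[OF that]]) simp
      also have "\<dots> = 1 / real (r n)" using rpos'[of n] by (simp add: powr_add)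
      finally show ?thesis .
    qed
    show "(\<lambda>n. \<Sum>m<r n. wt n m / real (r n) powr (\<gamma> + 1)) \<longlonglongrightarrow> 1 / (\<gamma> + 1)"
      using S by (simp add: sum_divide_distrib)
  qed (use K inv_r_lim in auto)
  then show ?thesis by (simp add: sum_divide_distrib)
qed

end


context ts begin

lemma first_sum:
  "(\<integral>\<omega>. indicator (A1 nrm M X R x) \<omega> * f (t_first nrm X R x \<omega>) \<partial>M)
     = (\<Sum>m<R. f (int m + 1) * measure M (Bk x m))"
proof -
  have "(\<integral>\<omega>. indicator (A1 nrm M X R x) \<omega> * f (t_first nrm X R x \<omega>) \<partial>M)
     = (\<Sum>i\<in>{1..int R}. f i * measure M (Efst x i))" by (rule int_first)
  also have "\<dots> = (\<Sum>m<R. f (int m + 1) * measure M (Efst x (int m + 1)))" by (rule sum_int_shift)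
  also have "\<dots> = (\<Sum>m<R. f (int m + 1) * measure M (Bk x m))"
  proof (rule sum.cong[OF refl])
    fix m assume "m \<in> {..<R}"
    have "measure M (Efst x (int m + 1)) = measure M (Bk x (nat (int m + 1 - 1)))" by (rule stat_first) simp
    then show "f (int m + 1) * measure M (Efst x (int m + 1)) = f (int m + 1) * measure M (Bk x m)" by simp
  qed
  finally show ?thesis .
qed

lemma last_sum:
  "(\<integral>\<omega>. indicator (A1 nrm M X R x) \<omega> * f (t_last nrm X R x \<omega>) \<partial>M)
     = (\<Sum>m<R. f (int (R - m)) * measure M (Fk x m))"
proof -
  have "(\<integral>\<omega>. indicator (A1 nrm M X R x) \<omega> * f (t_last nrm X R x \<omega>) \<partial>M)
     = (\<Sum>i\<in>{1..int R}. f i * measure M (Elst R x i))" by (rule int_last)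
  also have "\<dots> = (\<Sum>m<R. f (int m + 1) * measure M (Elst R x (int m + 1)))" by (rule sum_int_shift)
  also have "\<dots> = (\<Sum>m<R. f (int m + 1) * measure M (Fk x (R - Suc m)))"
  proof (rule sum.cong[OF refl])
    fix m assume m: "m \<in> {..<R}"
    have "measure M (Elst R x (int m + 1)) = measure M (Fk x (nat (int R - (int m + 1))))"
      by (rule stat_last) (use m in auto)
    moreover have "nat (int R - (int m + 1)) = R - Suc m" using m by auto
    ultimately show "f (int m + 1) * measure M (Elst R x (int m + 1)) = f (int m + 1) * measure M (Fk x (R - Suc m))"
      by simp
  qed
  also have "\<dots> = (\<Sum>m<R. f (int (R - Suc m) + 1) * measure M (Fk x (R - Suc (R - Suc m))))"
    using sum_reflect[of "\<lambda>m. f (int m + 1) * measure M (Fk x (R - Suc m))" R] by simp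
  also have "\<dots> = (\<Sum>m<R. f (int (R - m)) * measure M (Fk x m))"
  proof (rule sum.cong[OF refl])
    fix m assume m: "m \<in> {..<R}"
    then have "int (R - Suc m) + 1 = int (R - m)" "R - Suc (R - Suc m) = m" by auto
    then show "f (int (R - Suc m) + 1) * measure M (Fk x (R - Suc (R - Suc m))) = f (int (R - m)) * measure M (Fk x m)"
      by simp
  qed
  finally show ?thesis .
qed

lemma BF_sum: "(\<Sum>m<R. measure M (Bk x m)) = (\<Sum>m<R. measure M (Fk x m))"
  using first_sum[of R x "\<lambda>_. 1"] last_sum[of R x "\<lambda>_. 1"] by simp

end

context mainloc begin

lemma avg_a: "(\<lambda>n. (\<Sum>m<r n. a n m) / real (r n)) \<longlonglongrightarrow> \<theta>"
proof -
  have "(\<lambda>n. \<Sum>m<r n. (1 / real (r n)) * a n m) \<longlonglongrightarrow> \<theta> * 1"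
  proof (rule weighted_conv[where B="\<lambda>n. 1 / real (r n)"])
    show "\<bar>a n m - \<theta>\<bar> \<le> 1" for n m using a01[of n m] theta01 by (simp add: abs_le_iff)
    show "(\<lambda>n. \<Sum>m<r n. 1 / real (r n)) \<longlonglongrightarrow> 1"
    proof -
      have "(\<Sum>m<r n. 1 / real (r n)) = 1" for n using rpos'[of n] by simp
      then show ?thesis by simp
    qed
  qed (use K_a inv_r_lim in auto)
  then show ?thesis by (simp add: sum_divide_distrib)
qed

lemma sum_ab: "(\<Sum>m<r n. a n m) = (\<Sum>m<r n. b n m)"
  unfolding a_def b_def sum_divide_distrib[symmetric] using BF_sum by simp

lemma K_b:
  assumes e: "\<epsilon> > 0"
  shows "\<exists>l. eventually (\<lambda>n. \<forall>m. l \<le> m \<longrightarrow> m < r n \<longrightarrow> \<bar>b n m - \<theta>\<bar> \<le> \<epsilon>) sequentially"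
proof (rule K_from_avg[OF _ rlim _ _ e])
  show "\<bar>b n m - b n m'\<bar> \<le> 1" for n m m' using b01[of n m] b01[of n m'] by (simp add: abs_le_iff)
  show "(\<lambda>n. (\<Sum>m<r n. b n m) / real (r n)) \<longlonglongrightarrow> \<theta>" using avg_a by (simp add: sum_ab)
  fix \<epsilon>' :: real assume e': "\<epsilon>' > 0"
  obtain l where l: "eventually (\<lambda>n. \<forall>m. l \<le> m \<longrightarrow> m \<le> r n \<longrightarrow> b n l - b n m < \<epsilon>') sequentially"
    using b_close[OF e'] by blast
  show "\<exists>l. eventually (\<lambda>n. \<forall>m. l \<le> m \<longrightarrow> m < r n \<longrightarrow> \<bar>b n l - b n m\<bar> \<le> \<epsilon>') sequentially"
  proof (intro exI[of _ l])
    show "eventually (\<lambda>n. \<forall>m. l \<le> m \<longrightarrow> m < r n \<longrightarrow> \<bar>b n l - b n m\<bar> \<le> \<epsilon>') sequentially"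
      using l
    proof eventually_elim
      case (elim n)
      show ?case
      proof (intro allI impI)
        fix m assume m: "l \<le> m" "m < r n"
        have "b n l - b n m < \<epsilon>'" using elim m by auto
        moreover have "b n m \<le> b n l" by (rule b_mono[OF m(1)])
        ultimately show "\<bar>b n l - b n m\<bar> \<le> \<epsilon>'" by simp
      qed
    qed
  qed
qed

lemma div_conv: "(\<Sum>m<R. wt m * measure M (Bk (u n) m)) / (P * measure M {\<omega>\<in>space M. nrm (X \<omega> 0) > u n})
   = (\<Sum>m<R. wt m * a n m) / P"
  unfolding a_def w_def W0_eq by (simp add: sum_divide_distrib[symmetric] divide_divide_eq_left mult.commute)

lemma div_conv2: "(\<Sum>m<R. wt m * measure M (Fk (u n) m)) / (P * measure M {\<omega>\<in>space M. nrm (X \<omega> 0) > u n})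
   = (\<Sum>m<R. wt m * b n m) / P"
  unfolding b_def w_def W0_eq by (simp add: sum_divide_distrib[symmetric] divide_divide_eq_left mult.commute)

lemma S1: "\<gamma> > 0 \<Longrightarrow> (\<lambda>n. (\<Sum>m<r n. real (m + 1) powr \<gamma>) / real (r n) powr (\<gamma> + 1)) \<longlonglongrightarrow> 1 / (\<gamma> + 1)"
  by (rule filterlim_compose[OF powsum_lim rlim])

lemma S0: "\<gamma> > 0 \<Longrightarrow> (\<lambda>n. (\<Sum>m<r n. real m powr \<gamma>) / real (r n) powr (\<gamma> + 1)) \<longlonglongrightarrow> 1 / (\<gamma> + 1)"
  by (rule filterlim_compose[OF powsum0_lim rlim])

lemma final1:
  assumes g: "\<gamma> > 0"
  shows "(\<lambda>n. (\<integral>\<omega>. indicator (A1 nrm M X (r n) (u n)) \<omega>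
                 * real_of_int (t_first nrm X (r n) (u n) \<omega>) powr \<gamma> \<partial>M)
             / (real (r n) powr (\<gamma> + 1) * measure M {\<omega>\<in>space M. nrm (X \<omega> 0) > u n}))
           \<longlonglongrightarrow> theta_tail nrm N Y / (\<gamma> + 1)"
proof -
  have eq: "(\<integral>\<omega>. indicator (A1 nrm M X (r n) (u n)) \<omega> * real_of_int (t_first nrm X (r n) (u n) \<omega>) powr \<gamma> \<partial>M)
             / (real (r n) powr (\<gamma> + 1) * measure M {\<omega>\<in>space M. nrm (X \<omega> 0) > u n})
      = (\<Sum>m<r n. real (m + 1) powr \<gamma> * a n m) / real (r n) powr (\<gamma> + 1)" for n
  proof -
    have "(\<integral>\<omega>. indicator (A1 nrm M X (r n) (u n)) \<omega> * real_of_int (t_first nrm X (r n) (u n) \<omega>) powr \<gamma> \<partial>M)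
       = (\<Sum>m<r n. real_of_int (int m + 1) powr \<gamma> * measure M (Bk (u n) m))"
      by (rule first_sum[of "r n" "u n" "\<lambda>i. real_of_int i powr \<gamma>"])
    also have "\<dots> = (\<Sum>m<r n. real (m + 1) powr \<gamma> * measure M (Bk (u n) m))"
      by (rule sum.cong[OF refl]) (simp add: add.commute)
    finally show ?thesis by (simp only: div_conv)
  qed
  have "(\<lambda>n. (\<Sum>m<r n. real (m + 1) powr \<gamma> * a n m) / real (r n) powr (\<gamma> + 1)) \<longlonglongrightarrow> \<theta> / (\<gamma> + 1)"
  proof (rule lim_general[OF g])
    show "0 \<le> a n m \<and> a n m \<le> 1" for n m using a01 by auto
    show "real (m + 1) powr \<gamma> \<le> real (r n) powr \<gamma>" if "m < r n" for n m
      using that g by (intro powr_mono2) auto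
  qed (use K_a S1[OF g] in auto)
  then show ?thesis unfolding eq \<theta>_def .
qed

lemma final2:
  assumes g: "\<gamma> > 0"
  shows "(\<lambda>n. (\<integral>\<omega>. indicator (A1 nrm M X (r n) (u n)) \<omega>
                 * (real (r n) - real_of_int (t_first nrm X (r n) (u n) \<omega>)) powr \<gamma> \<partial>M)
             / (real (r n) powr (\<gamma> + 1) * measure M {\<omega>\<in>space M. nrm (X \<omega> 0) > u n}))
           \<longlonglongrightarrow> theta_tail nrm N Y / (\<gamma> + 1)"
proof -
  have eq: "(\<integral>\<omega>. indicator (A1 nrm M X (r n) (u n)) \<omega> * (real (r n) - real_of_int (t_first nrm X (r n) (u n) \<omega>)) powr \<gamma> \<partial>M)
             / (real (r n) powr (\<gamma> + 1) * measure M {\<omega>\<in>space M. nrm (X \<omega> 0) > u n})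
      = (\<Sum>m<r n. real (r n - Suc m) powr \<gamma> * a n m) / real (r n) powr (\<gamma> + 1)" for n
  proof -
    have "(\<integral>\<omega>. indicator (A1 nrm M X (r n) (u n)) \<omega> * (real (r n) - real_of_int (t_first nrm X (r n) (u n) \<omega>)) powr \<gamma> \<partial>M)
       = (\<Sum>m<r n. (real (r n) - real_of_int (int m + 1)) powr \<gamma> * measure M (Bk (u n) m))"
      by (rule first_sum[of "r n" "u n" "\<lambda>i. (real (r n) - real_of_int i) powr \<gamma>"])
    also have "\<dots> = (\<Sum>m<r n. real (r n - Suc m) powr \<gamma> * measure M (Bk (u n) m))"
      by (rule sum.cong[OF refl]) (auto simp: of_nat_diff algebra_simps)
    finally show ?thesis by (simp only: div_conv)
  qed
  have "(\<lambda>n. (\<Sum>m<r n. real (r n - Suc m) powr \<gamma> * a n m) / real (r n) powr (\<gamma> + 1)) \<longlonglongrightarrow> \<theta> / (\<gamma> + 1)"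
  proof (rule lim_general[OF g])
    show "0 \<le> a n m \<and> a n m \<le> 1" for n m using a01 by auto
    show "real (r n - Suc m) powr \<gamma> \<le> real (r n) powr \<gamma>" if "m < r n" for n m
      using that g by (intro powr_mono2) auto
    have "(\<Sum>m<r n. real (r n - Suc m) powr \<gamma>) = (\<Sum>m<r n. real m powr \<gamma>)" for n
      by (rule sum_reflect)
    then show "(\<lambda>n. (\<Sum>m<r n. real (r n - Suc m) powr \<gamma>) / real (r n) powr (\<gamma> + 1)) \<longlonglongrightarrow> 1 / (\<gamma> + 1)"
      using S0[OF g] by simp
  qed (use K_a in auto)
  then show ?thesis unfolding eq \<theta>_def .
qed

lemma final3:
  assumes g: "\<gamma> > 0"
  shows "(\<lambda>n. (\<integral>\<omega>. indicator (A1 nrm M X (r n) (u n)) \<omega>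
                 * real_of_int (t_last nrm X (r n) (u n) \<omega>) powr \<gamma> \<partial>M)
             / (real (r n) powr (\<gamma> + 1) * measure M {\<omega>\<in>space M. nrm (X \<omega> 0) > u n}))
           \<longlonglongrightarrow> theta_tail nrm N Y / (\<gamma> + 1)"
proof -
  have eq: "(\<integral>\<omega>. indicator (A1 nrm M X (r n) (u n)) \<omega> * real_of_int (t_last nrm X (r n) (u n) \<omega>) powr \<gamma> \<partial>M)
             / (real (r n) powr (\<gamma> + 1) * measure M {\<omega>\<in>space M. nrm (X \<omega> 0) > u n})
      = (\<Sum>m<r n. real (r n - m) powr \<gamma> * b n m) / real (r n) powr (\<gamma> + 1)" for n
  proof -
    have "(\<integral>\<omega>. indicator (A1 nrm M X (r n) (u n)) \<omega> * real_of_int (t_last nrm X (r n) (u n) \<omega>) powr \<gamma> \<partial>M)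
       = (\<Sum>m<r n. real_of_int (int (r n - m)) powr \<gamma> * measure M (Fk (u n) m))"
      by (rule last_sum[of "r n" "u n" "\<lambda>i. real_of_int i powr \<gamma>"])
    also have "\<dots> = (\<Sum>m<r n. real (r n - m) powr \<gamma> * measure M (Fk (u n) m))"
      by (rule sum.cong[OF refl]) (simp only: of_int_of_nat_eq)
    finally show ?thesis by (simp only: div_conv2)
  qed
  have "(\<lambda>n. (\<Sum>m<r n. real (r n - m) powr \<gamma> * b n m) / real (r n) powr (\<gamma> + 1)) \<longlonglongrightarrow> \<theta> / (\<gamma> + 1)"
  proof (rule lim_general[OF g])
    show "0 \<le> b n m \<and> b n m \<le> 1" for n m using b01 by auto
    show "real (r n - m) powr \<gamma> \<le> real (r n) powr \<gamma>" if "m < r n" for n m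
      using that g by (intro powr_mono2) auto
    have "(\<Sum>m<r n. real (r n - m) powr \<gamma>) = (\<Sum>m<r n. real (m + 1) powr \<gamma>)" for n
    proof -
      have "(\<Sum>m<r n. real (r n - m) powr \<gamma>) = (\<Sum>m<r n. real (r n - Suc m + 1) powr \<gamma>)"
        by (rule sum.cong[OF refl]) (auto simp: Suc_diff_Suc)
      also have "\<dots> = (\<Sum>m<r n. real (m + 1) powr \<gamma>)"
        by (rule sum_reflect[of "\<lambda>m. real (m + 1) powr \<gamma>"])
      finally show ?thesis .
    qed
    then show "(\<lambda>n. (\<Sum>m<r n. real (r n - m) powr \<gamma>) / real (r n) powr (\<gamma> + 1)) \<longlonglongrightarrow> 1 / (\<gamma> + 1)"
      using S1[OF g] by simp
  qed (use K_b in auto)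
  then show ?thesis unfolding eq \<theta>_def .
qed

lemma final4:
  assumes g: "\<gamma> > 0"
  shows "(\<lambda>n. (\<integral>\<omega>. indicator (A1 nrm M X (r n) (u n)) \<omega>
                 * (real (r n) - real_of_int (t_last nrm X (r n) (u n) \<omega>)) powr \<gamma> \<partial>M)
             / (real (r n) powr (\<gamma> + 1) * measure M {\<omega>\<in>space M. nrm (X \<omega> 0) > u n}))
           \<longlonglongrightarrow> theta_tail nrm N Y / (\<gamma> + 1)"
proof -
  have eq: "(\<integral>\<omega>. indicator (A1 nrm M X (r n) (u n)) \<omega> * (real (r n) - real_of_int (t_last nrm X (r n) (u n) \<omega>)) powr \<gamma> \<partial>M)
             / (real (r n) powr (\<gamma> + 1) * measure M {\<omega>\<in>space M. nrm (X \<omega> 0) > u n})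
      = (\<Sum>m<r n. real m powr \<gamma> * b n m) / real (r n) powr (\<gamma> + 1)" for n
  proof -
    have "(\<integral>\<omega>. indicator (A1 nrm M X (r n) (u n)) \<omega> * (real (r n) - real_of_int (t_last nrm X (r n) (u n) \<omega>)) powr \<gamma> \<partial>M)
       = (\<Sum>m<r n. (real (r n) - real_of_int (int (r n - m))) powr \<gamma> * measure M (Fk (u n) m))"
      by (rule last_sum[of "r n" "u n" "\<lambda>i. (real (r n) - real_of_int i) powr \<gamma>"])
    also have "\<dots> = (\<Sum>m<r n. real m powr \<gamma> * measure M (Fk (u n) m))"
      by (rule sum.cong[OF refl]) (auto simp: of_nat_diff)
    finally show ?thesis by (simp only: div_conv2)
  qed
  have "(\<lambda>n. (\<Sum>m<r n. real m powr \<gamma> * b n m) / real (r n) powr (\<gamma> + 1)) \<longlonglongrightarrow> \<theta> / (\<gamma> + 1)"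
  proof (rule lim_general[OF g])
    show "0 \<le> b n m \<and> b n m \<le> 1" for n m using b01 by auto
    show "real m powr \<gamma> \<le> real (r n) powr \<gamma>" if "m < r n" for n m
      using that g by (intro powr_mono2) auto
  qed (use K_b S0[OF g] in auto)
  then show ?thesis unfolding eq \<theta>_def .
qed

end


theorem corollary3p3:
  fixes nrm :: "real ^ 'd \<Rightarrow> real"
    and M :: "'a measure" and X :: "'a \<Rightarrow> int \<Rightarrow> real ^ 'd"
    and N :: "'b measure" and Y :: "'b \<Rightarrow> int \<Rightarrow> real ^ 'd"
    and u :: "nat \<Rightarrow> real" and r :: "nat \<Rightarrow> nat" and \<gamma> :: real
  defines "w \<equiv> (\<lambda>n. measure M {\<omega>\<in>space M. nrm (X \<omega> 0) > u n})"
  assumes "is_norm nrm"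
    and "random_series M X"
    and "strictly_stationary M X"
    and "regularly_varying_series nrm M X"
    and "is_tail_process nrm M X N Y"
    and "\<forall>n. u n > 0" and "\<forall>n. r n \<ge> 1"
    and "filterlim u at_top sequentially"
    and "filterlim r at_top sequentially"
    and "filterlim (\<lambda>n. real n * w n) at_top sequentially"
    and "(\<lambda>n. real (r n) / real n) \<longlonglongrightarrow> 0"
    and "(\<lambda>n. real (r n) * w n) \<longlonglongrightarrow> 0"
    and "AC_cond nrm M X r u"
    and "\<gamma> > 0"
  shows "((\<lambda>n. (\<integral>\<omega>. indicator (A1 nrm M X (r n) (u n)) \<omega>
                 * real_of_int (t_first nrm X (r n) (u n) \<omega>) powr \<gamma> \<partial>M)
             / (real (r n) powr (\<gamma> + 1) * w n))
           \<longlonglongrightarrow> theta_tail nrm N Y / (\<gamma> + 1)) \<and>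
    ((\<lambda>n. (\<integral>\<omega>. indicator (A1 nrm M X (r n) (u n)) \<omega>
                 * (real (r n) - real_of_int (t_first nrm X (r n) (u n) \<omega>)) powr \<gamma> \<partial>M)
             / (real (r n) powr (\<gamma> + 1) * w n))
           \<longlonglongrightarrow> theta_tail nrm N Y / (\<gamma> + 1)) \<and>
    ((\<lambda>n. (\<integral>\<omega>. indicator (A1 nrm M X (r n) (u n)) \<omega>
                 * real_of_int (t_last nrm X (r n) (u n) \<omega>) powr \<gamma> \<partial>M)
             / (real (r n) powr (\<gamma> + 1) * w n))
           \<longlonglongrightarrow> theta_tail nrm N Y / (\<gamma> + 1)) \<and>
    ((\<lambda>n. (\<integral>\<omega>. indicator (A1 nrm M X (r n) (u n)) \<omega>
                 * (real (r n) - real_of_int (t_last nrm X (r n) (u n) \<omega>)) powr \<gamma> \<partial>M)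
             / (real (r n) powr (\<gamma> + 1) * w n))
           \<longlonglongrightarrow> theta_tail nrm N Y / (\<gamma> + 1))"
proof -
  have Wpos: "\<And>x. measure M {\<omega>\<in>space M. nrm (X \<omega> 0) > x} > 0"
    using assms(5) unfolding regularly_varying_series_def by blast
  obtain \<alpha> where \<alpha>: "\<alpha> > 0" and RV: "\<forall>y>0. ((\<lambda>x. measure M {\<omega>\<in>space M. nrm (X \<omega> 0) > x * y}
                         / measure M {\<omega>\<in>space M. nrm (X \<omega> 0) > x}) \<longlongrightarrow> y powr (-\<alpha>)) at_top"
    using assms(5) unfolding regularly_varying_series_def by blast
  have MLoc: "mainloc nrm M X N Y u r \<alpha>"
  proof (intro mainloc.intro ts.intro mainloc_axioms.intro)
    show "is_norm nrm" by (rule assms(2))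
    show "random_series M X" by (rule assms(3))
    show "strictly_stationary M X" by (rule assms(4))
    show "is_tail_process nrm M X N Y" by (rule assms(6))
    show "\<alpha> > 0" by (rule \<alpha>)
    show "((\<lambda>x. measure M {\<omega>\<in>space M. nrm (X \<omega> 0) > x * y}
                         / measure M {\<omega>\<in>space M. nrm (X \<omega> 0) > x}) \<longlongrightarrow> y powr (-\<alpha>)) at_top"
      if "y > 0" for y using RV that by blast
    show "measure M {\<omega>\<in>space M. nrm (X \<omega> 0) > x} > 0" for x by (rule Wpos)
    show "u n > 0" for n using assms(7) by blast
    show "filterlim u at_top sequentially" by (rule assms(9))
    show "r n \<ge> 1" for n using assms(8) by blast
    show "filterlim r at_top sequentially" by (rule assms(10))
    show "AC_cond nrm M X r u" by (rule assms(14))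
  qed
  interpret L: mainloc nrm M X N Y u r \<alpha> by (rule MLoc)
  show ?thesis
    unfolding w_def
    by (intro conjI L.final1 L.final2 L.final3 L.final4 assms(15))
qed

end
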